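(* Let $n\ge 3$. The map $\phi_n:|\mathcal K_n|\to\mathbb{R}^n$ is a piecewise linear homeomorphism of $|\mathcal K_n|\cong\partial(W_n^\circ)$ onto the boundary sphere $\partial(Root_n)$. It maps the vertex set of $\mathcal K_n$ bijectively onto the vertex set $\{e_i-e_j: i\neq j\}$ of $Root_n$, and the images of the simplices of $\mathcal K_n$ form a triangulation (without new vertices) of $\partial(Root_n)$, in which every face of $Root_n$ is triangulated by images of simplices of $\mathcal K_n$.
   Context: Identify $[n]$ with the vertices of a regular $n$-gon in $S^1$, labelled counterclockwise, with counterclockwise order $\preceq$; for $a\ne b\in[n]$, $[a,b)=\{z\in S^1:a\preceq z\prec b\}$. A finite collection of such arcs is admissible if any two distinct members $I,J$ are either intersecting and strictly nested, or disjoint with the sink of neither equal to the source of the other. $\mathcal K_n$ is the simplicial complex on the $n(n-1)$ arcs $[i,j)$, $i\neq j$, whose simplices are the nonempty admissible families; it is isomorphic to the boundary complex of the polar dual $W_n^\circ$ of the $(n-1)$-dimensional cyclohedron $W_n$. $Root_n=\mathrm{Conv}\{e_i-e_j:1\le i\ne j\le n\}\subset H_0=\{x\in\mathbb{R}^n:\sum x_i=0\}$, boundary relative to $H_0$. $\phi_n$ is affine on each simplex of $\mathcal K_n$ and sends $[i,j)$ to $e_i-e_j$. *)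

theory Defs
  imports "HOL-Analysis.Analysis"
begin

text \<open>Vertices of the regular n-gon are labelled 0,...,n-1 counterclockwise.
  An arc [a,b) (a \<noteq> b) is encoded by the pair (a,b); as a subset of the circle it is the
  union of the half-open edges [k,k+1) for k = a, a+1, ..., b-1 (mod n), so its
  set-theoretic relations (intersection, nesting) are exactly those of the vertex set below.\<close>

definition arcs :: "nat \<Rightarrow> (nat \<times> nat) set" where
  "arcs n = {(a, b). a < n \<and> b < n \<and> a \<noteq> b}"

definition arc_verts :: "nat \<Rightarrow> nat \<times> nat \<Rightarrow> nat set" where
  "arc_verts n I = {(fst I + k) mod n | k. k < (snd I + n - fst I) mod n}"

text \<open>source of [a,b) is a, sink is b\<close>
definition admissible :: "nat \<Rightarrow> (nat \<times> nat) set \<Rightarrow> bool" where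
  "admissible n F \<longleftrightarrow> finite F \<and> F \<noteq> {} \<and> F \<subseteq> arcs n \<and>
     (\<forall>I\<in>F. \<forall>J\<in>F. I \<noteq> J \<longrightarrow>
        (arc_verts n I \<inter> arc_verts n J \<noteq> {} \<and>
           (arc_verts n I \<subset> arc_verts n J \<or> arc_verts n J \<subset> arc_verts n I))
      \<or> (arc_verts n I \<inter> arc_verts n J = {} \<and> snd I \<noteq> fst J \<and> snd J \<noteq> fst I))"

text \<open>Geometric realization of the simplicial complex K_n inside the space of real functions
  on arcs (product topology): the closed geometric simplex of a face sigma, and |K_n|.\<close>
definition geom_simplex :: "(nat \<times> nat) set \<Rightarrow> ((nat \<times> nat) \<Rightarrow> real) set" where
  "geom_simplex \<sigma> = {t. (\<forall>x. 0 \<le> t x) \<and> (\<forall>x. x \<notin> \<sigma> \<longrightarrow> t x = 0) \<and> sum t \<sigma> = 1}"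

definition realization :: "nat \<Rightarrow> ((nat \<times> nat) \<Rightarrow> real) set" where
  "realization n = (\<Union>\<sigma>\<in>{\<sigma>. admissible n \<sigma>}. geom_simplex \<sigma>)"

definition realization_top :: "nat \<Rightarrow> ((nat \<times> nat) \<Rightarrow> real) topology" where
  "realization_top n = subtopology (powertop_real UNIV) (realization n)"

definition vertex_pt :: "nat \<times> nat \<Rightarrow> ((nat \<times> nat) \<Rightarrow> real)" where
  "vertex_pt x = (\<lambda>y. if y = x then 1 else 0)"

text \<open>R^n is real^'n, with the vertex labels 0..n-1 identified with the coordinates via a
  bijection v; e_i is axis (v i) 1.\<close>
definition ee :: "(nat \<Rightarrow> 'n::finite) \<Rightarrow> nat \<Rightarrow> real^'n" where
  "ee v i = axis (v i) 1"

definition root_vert :: "(nat \<Rightarrow> 'n::finite) \<Rightarrow> nat \<times> nat \<Rightarrow> real^'n" where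
  "root_vert v x = ee v (fst x) - ee v (snd x)"

definition Root :: "nat \<Rightarrow> (nat \<Rightarrow> 'n::finite) \<Rightarrow> (real^'n) set" where
  "Root n v = convex hull {ee v i - ee v j | i j. i < n \<and> j < n \<and> i \<noteq> j}"

definition H0 :: "(real^'n::finite) set" where
  "H0 = {x. (\<Sum>i\<in>UNIV. x $ i) = 0}"

definition Root_boundary :: "nat \<Rightarrow> (nat \<Rightarrow> 'n::finite) \<Rightarrow> (real^'n) set" where
  "Root_boundary n v = (top_of_set H0) frontier_of (Root n v)"

definition phi :: "nat \<Rightarrow> (nat \<Rightarrow> 'n::finite) \<Rightarrow> ((nat \<times> nat) \<Rightarrow> real) \<Rightarrow> real^'n" where
  "phi n v t = (\<Sum>x\<in>arcs n. t x *\<^sub>R root_vert v x)"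

end

theory Submission
  imports Defs
begin


definition pr :: "nat \<Rightarrow> nat \<Rightarrow> nat" where "pr n k = (k + n - 1) mod n"
definition pos :: "nat \<Rightarrow> nat \<Rightarrow> nat \<Rightarrow> nat" where "pos n a k = (k + n - a) mod n"

lemma pr_alt: "k < n \<Longrightarrow> pr n k = (if k = 0 then n - 1 else k - 1)"
proof -
  assume k: "k < n"
  show ?thesis
  proof (cases k)
    case 0 then show ?thesis using k by (simp add: pr_def)
  next
    case (Suc m)
    then have "k + n - 1 = m + n" by simp
    then show ?thesis using Suc k by (simp add: pr_def mod_if)
  qed
qed

lemma pr_lt: "k < n \<Longrightarrow> pr n k < n" by (simp add: pr_alt, linarith)

lemma pos_lt: "0 < n \<Longrightarrow> pos n a k < n" by (simp add: pos_def)

lemma pos_alt: "k < n \<Longrightarrow> a < n \<Longrightarrow> pos n a k = (if a \<le> k then k - a else k + n - a)"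
  unfolding pos_def by (auto simp: mod_if)

lemma pos_self: "a < n \<Longrightarrow> pos n a a = 0" by (simp add: pos_alt)

lemma pos_inv: "k < n \<Longrightarrow> a < n \<Longrightarrow> (a + pos n a k) mod n = k"
  by (auto simp: pos_alt mod_if)

lemma pos_of: "j < n \<Longrightarrow> a < n \<Longrightarrow> pos n a ((a + j) mod n) = j"
  by (auto simp: pos_alt mod_if)

lemma pos_inj: "k < n \<Longrightarrow> k' < n \<Longrightarrow> a < n \<Longrightarrow> pos n a k = pos n a k' \<Longrightarrow> k = k'"
  by (metis pos_inv)

lemma pos_pr: "k < n \<Longrightarrow> a < n \<Longrightarrow> k \<noteq> a \<Longrightarrow> pos n a (pr n k) = pos n a k - 1"
  by (auto simp: pos_alt pr_alt)

lemma pos_pr_self: "a < n \<Longrightarrow> pos n a (pr n a) = n - 1"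
  by (auto simp: pos_alt pr_alt)

lemma pr_step: "j + 1 < n \<Longrightarrow> a < n \<Longrightarrow> pr n ((a + (j+1)) mod n) = (a + j) mod n"
  by (auto simp: pr_alt mod_if)

lemma arc_mem: "a < n \<Longrightarrow> arc_verts n (a,b) = {k. k < n \<and> pos n a k < pos n a b}"
proof -
  assume a: "a < n"
  have n: "0 < n" using a by simp
  show ?thesis
    unfolding arc_verts_def
  proof (intro set_eqI iffI)
    fix k assume "k \<in> {(fst (a, b) + j) mod n |j. j < (snd (a, b) + n - fst (a, b)) mod n}"
    then obtain j where j: "k = (a+j) mod n" "j < (b + n - a) mod n" by auto
    have "j < n" using j(2) n by (meson mod_less_divisor order.strict_trans)
    have "pos n a k = j" using j(1) \<open>j < n\<close> a pos_of by simp
    then show "k \<in> {k. k < n \<and> pos n a k < pos n a b}" using j a n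
      by (simp add: pos_def[of n a b])
  next
    fix k assume "k \<in> {k. k < n \<and> pos n a k < pos n a b}"
    then show "k \<in> {(fst (a, b) + j) mod n |j. j < (snd (a, b) + n - fst (a, b)) mod n}"
      using pos_inv[of k n a] a by (auto simp: pos_def intro!: exI[of _ "pos n a k"])
  qed
qed

lemma arcsD: "(a,b) \<in> arcs n \<Longrightarrow> a < n \<and> b < n \<and> a \<noteq> b"
  by (simp add: arcs_def)

lemma arc_len: assumes "(a,b) \<in> arcs n" shows "0 < pos n a b" "pos n a b < n"
proof -
  have ab: "a < n" "b < n" "a \<noteq> b" using arcsD[OF assms] by auto
  show "pos n a b < n" using ab by (simp add: pos_lt)
  show "0 < pos n a b"
  proof (rule ccontr)
    assume "\<not> 0 < pos n a b"
    then have "pos n a b = pos n a a" using pos_self[of a n] ab by simp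
    then show False using pos_inj[of b n a a] ab by simp
  qed
qed

lemma av_sub: "(a,b) \<in> arcs n \<Longrightarrow> arc_verts n (a,b) \<subseteq> {..<n}"
  using arcsD arc_mem by blast

lemma av_mem: "(a,b) \<in> arcs n \<Longrightarrow> k \<in> arc_verts n (a,b) \<longleftrightarrow> k < n \<and> pos n a k < pos n a b"
  using arcsD arc_mem by blast

lemma src_in: "(a,b) \<in> arcs n \<Longrightarrow> a \<in> arc_verts n (a,b)"
proof -
  assume x: "(a,b) \<in> arcs n"
  show ?thesis using av_mem[OF x] arcsD[OF x] arc_len[OF x] pos_self[of a n] by simp
qed

lemma snk_notin: "(a,b) \<in> arcs n \<Longrightarrow> b \<notin> arc_verts n (a,b)"
  using av_mem by blast

lemma pr_src_notin: "(a,b) \<in> arcs n \<Longrightarrow> pr n a \<notin> arc_verts n (a,b)"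
proof -
  assume x: "(a,b) \<in> arcs n"
  show ?thesis using av_mem[OF x] arcsD[OF x] arc_len[OF x] pos_pr_self[of a n] by (simp, linarith)
qed

lemma pr_snk_in: "(a,b) \<in> arcs n \<Longrightarrow> pr n b \<in> arc_verts n (a,b)"
proof -
  assume x: "(a,b) \<in> arcs n"
  have ab: "a < n" "b < n" "a \<noteq> b" using arcsD[OF x] by auto
  have "pos n a (pr n b) = pos n a b - 1" using pos_pr ab by metis
  then show ?thesis using av_mem[OF x] arc_len[OF x] pr_lt ab by auto
qed

lemma enter: "(a,b) \<in> arcs n \<Longrightarrow> k \<in> arc_verts n (a,b) \<Longrightarrow> pr n k \<notin> arc_verts n (a,b) \<Longrightarrow> k = a"
proof (rule ccontr)
  assume x: "(a,b) \<in> arcs n" and k: "k \<in> arc_verts n (a,b)" "pr n k \<notin> arc_verts n (a,b)" "k \<noteq> a"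
  have ab: "a < n" "b < n" "a \<noteq> b" using arcsD[OF x] by auto
  have kn: "k < n" "pos n a k < pos n a b" using k av_mem[OF x] by auto
  have "pos n a (pr n k) = pos n a k - 1" using pos_pr ab kn k by metis
  then show False using k kn av_mem[OF x] pr_lt by auto
qed

lemma leave: "(a,b) \<in> arcs n \<Longrightarrow> k < n \<Longrightarrow> k \<notin> arc_verts n (a,b) \<Longrightarrow> pr n k \<in> arc_verts n (a,b) \<Longrightarrow> k = b"
proof -
  assume x: "(a,b) \<in> arcs n" and k: "k < n" "k \<notin> arc_verts n (a,b)" "pr n k \<in> arc_verts n (a,b)"
  have ab: "a < n" "b < n" "a \<noteq> b" using arcsD[OF x] by auto
  have "k \<noteq> a" using k src_in[OF x] by auto
  then have "pos n a (pr n k) = pos n a k - 1" using pos_pr ab k by metis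
  moreover have "pos n a (pr n k) < pos n a b" "\<not> pos n a k < pos n a b" using k av_mem[OF x] by auto
  ultimately have "pos n a k = pos n a b" by linarith
  then show "k = b" using pos_inj ab k by metis
qed

lemma av_inj: assumes "x \<in> arcs n" "y \<in> arcs n" "arc_verts n x = arc_verts n y" shows "x = y"
proof -
  obtain a b c d where xy: "x = (a,b)" "y = (c,d)" by fastforce
  have x': "(a,b) \<in> arcs n" and y': "(c,d) \<in> arcs n" using assms xy by auto
  have e: "arc_verts n (a,b) = arc_verts n (c,d)" using assms xy by simp
  have "a \<in> arc_verts n (c,d)" "pr n a \<notin> arc_verts n (c,d)"
    using src_in[OF x'] pr_src_notin[OF x'] e by auto
  then have "a = c" using enter[OF y'] by blast
  have "b \<notin> arc_verts n (c,d)" "pr n b \<in> arc_verts n (c,d)" "b < n"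
    using snk_notin[OF x'] pr_snk_in[OF x'] e arcsD[OF x'] by auto
  then have "b = d" using leave[OF y'] by blast
  show ?thesis using xy \<open>a = c\<close> \<open>b = d\<close> by simp
qed

lemma same_src: assumes "(a,b) \<in> arcs n" "(a,c) \<in> arcs n"
  shows "arc_verts n (a,b) \<subseteq> arc_verts n (a,c) \<or> arc_verts n (a,c) \<subseteq> arc_verts n (a,b)"
proof (cases "pos n a b \<le> pos n a c")
  case True
  then have "arc_verts n (a,b) \<subseteq> arc_verts n (a,c)"
    by (auto simp: av_mem[OF assms(1)] av_mem[OF assms(2)])
  then show ?thesis by blast
next
  case False
  then have "arc_verts n (a,c) \<subseteq> arc_verts n (a,b)"
    by (auto simp: av_mem[OF assms(1)] av_mem[OF assms(2)])
  then show ?thesis by blast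
qed

lemma same_src_snk: assumes "(a,b) \<in> arcs n" "(a,c) \<in> arcs n" "arc_verts n (a,b) \<subset> arc_verts n (a,c)"
  shows "b \<in> arc_verts n (a,c)"
proof -
  have "\<not> pos n a c \<le> pos n a b"
  proof
    assume "pos n a c \<le> pos n a b"
    then have "arc_verts n (a,c) \<subseteq> arc_verts n (a,b)"
      by (auto simp: av_mem[OF assms(1)] av_mem[OF assms(2)])
    then show False using assms(3) by blast
  qed
  then show ?thesis using av_mem[OF assms(2)] arcsD[OF assms(1)] by auto
qed

lemma walk: "P j1 \<Longrightarrow> \<not> P j2 \<Longrightarrow> j1 < j2 \<Longrightarrow> \<exists>j. j1 \<le> j \<and> j < j2 \<and> P j \<and> \<not> P (Suc j)"
proof (induction j2)
  case 0 then show ?case by simp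
next
  case (Suc m)
  show ?case
  proof (cases "P m")
    case True then show ?thesis using Suc.prems by (intro exI[of _ m]) auto
  next
    case False
    then have "j1 < m" using Suc.prems by (metis less_SucE)
    then show ?thesis using Suc.IH[OF Suc.prems(1) False] by (meson less_Suc_eq)
  qed
qed

lemma exit_lemma:
  assumes x: "x \<in> arcs n" and y: "y \<in> arcs n" and m: "m \<in> arc_verts n x \<inter> arc_verts n y"
    and k: "k \<in> arc_verts n y" "k \<notin> arc_verts n x"
  shows "snd x \<in> arc_verts n y \<or> pr n (fst x) \<in> arc_verts n y"
proof -
  obtain a b c d where xy: "x = (a,b)" "y = (c,d)" by fastforce
  note xx = x[unfolded xy] and yy = y[unfolded xy]
  have cd: "c < n" "d < n" "c \<noteq> d" using arcsD[OF yy] by auto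
  define P where "P j = ((c + j) mod n \<in> arc_verts n (a,b))" for j
  have mn: "m < n" "pos n c m < pos n c d" using m av_mem[OF yy] xy by auto
  have kn: "k < n" "pos n c k < pos n c d" using k av_mem[OF yy] xy by auto
  have P1: "P (pos n c m)" using m xy pos_inv[OF mn(1) cd(1)] by (simp add: P_def)
  have P2: "\<not> P (pos n c k)" using k xy pos_inv[OF kn(1) cd(1)] by (simp add: P_def)
  have Ld: "pos n c d < n" using arc_len[OF yy] by simp
  have inY: "(c + j) mod n \<in> arc_verts n (c,d)" if "j < pos n c d" for j
    using that Ld cd av_mem[OF yy] pos_of[of j n c] by simp
  have "pos n c m \<noteq> pos n c k" using P1 P2 by metis
  then consider "pos n c m < pos n c k" | "pos n c k < pos n c m" by linarith
  then show ?thesis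
  proof cases
    case 1
    obtain j where j: "pos n c m \<le> j" "j < pos n c k" "P j" "\<not> P (Suc j)" using walk[OF P1 P2 1] by blast
    have "pr n ((c + (j+1)) mod n) = (c + j) mod n" using pr_step[of j n c] j kn Ld cd by simp
    then have "(c + (j+1)) mod n = b" using leave[OF xx, of "(c + (j+1)) mod n"] j cd(1)
      by (simp add: P_def)
    moreover have "(c + (j+1)) mod n \<in> arc_verts n (c,d)" using inY[of "j+1"] j kn by simp
    ultimately show ?thesis using xy by simp
  next
    case 2
    obtain j where j: "pos n c k \<le> j" "j < pos n c m" "\<not> P j" "P (Suc j)"
      using walk[of "\<lambda>j. \<not> P j", OF P2 _ 2] P1 by blast
    have "pr n ((c + (j+1)) mod n) = (c + j) mod n" using pr_step[of j n c] j mn Ld cd by simp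
    then have "(c + (j+1)) mod n = a" using enter[OF xx, of "(c + (j+1)) mod n"] j
      by (simp add: P_def)
    then have "pr n a = (c + j) mod n" using \<open>pr n ((c + (j+1)) mod n) = (c + j) mod n\<close> by simp
    moreover have "(c + j) mod n \<in> arc_verts n (c,d)" using inY j mn by simp
    ultimately show ?thesis using xy by simp
  qed
qed

lemma nested_no_chain:
  assumes x: "x \<in> arcs n" and y: "y \<in> arcs n" and sub: "arc_verts n x \<subseteq> arc_verts n y"
  shows "snd x \<noteq> fst y" "snd y \<noteq> fst x"
proof -
  obtain a b c d where xy: "x = (a,b)" "y = (c,d)" by fastforce
  show "snd x \<noteq> fst y"
    using pr_snk_in[of a b n] pr_src_notin[of c d n] sub x y xy by auto
  show "snd y \<noteq> fst x"
    using src_in[of a b n] snk_notin[of c d n] sub x y xy by auto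
qed

lemma finite_arcs: "finite (arcs n)"
  by (rule finite_subset[of _ "{..<n} \<times> {..<n}"]) (auto simp: arcs_def)

lemma adm_pair: "admissible n \<sigma> \<Longrightarrow> I \<in> \<sigma> \<Longrightarrow> J \<in> \<sigma> \<Longrightarrow> I \<noteq> J \<Longrightarrow>
   (arc_verts n I \<inter> arc_verts n J \<noteq> {} \<and> (arc_verts n I \<subset> arc_verts n J \<or> arc_verts n J \<subset> arc_verts n I))
   \<or> (arc_verts n I \<inter> arc_verts n J = {} \<and> snd I \<noteq> fst J \<and> snd J \<noteq> fst I)"
  unfolding admissible_def by blast

lemma adm_sub: "admissible n \<sigma> \<Longrightarrow> \<tau> \<subseteq> \<sigma> \<Longrightarrow> \<tau> \<noteq> {} \<Longrightarrow> admissible n \<tau>"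
proof -
  assume a: "admissible n \<sigma>" and s: "\<tau> \<subseteq> \<sigma>" and ne: "\<tau> \<noteq> {}"
  have "finite \<tau>" using a s finite_subset unfolding admissible_def by blast
  moreover have "\<sigma> \<subseteq> arcs n" using a unfolding admissible_def by blast
  then have "\<tau> \<subseteq> arcs n" using s by blast
  ultimately show ?thesis using a s ne unfolding admissible_def by blast
qed

definition supp :: "nat \<Rightarrow> ((nat\<times>nat)\<Rightarrow>real) \<Rightarrow> (nat\<times>nat) set" where
  "supp n t = {x\<in>arcs n. 0 < t x}"

definition good :: "nat \<Rightarrow> ((nat\<times>nat)\<Rightarrow>real) \<Rightarrow> bool" where
  "good n t \<longleftrightarrow> (\<forall>x. 0 \<le> t x) \<and> (\<forall>x. x \<notin> arcs n \<longrightarrow> t x = 0) \<and> (supp n t \<noteq> {} \<longrightarrow> admissible n (supp n t))"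

definition cover :: "nat \<Rightarrow> ((nat\<times>nat)\<Rightarrow>real) \<Rightarrow> nat \<Rightarrow> real" where
  "cover n t k = sum t {x \<in> arcs n. k \<in> arc_verts n x}"

lemma good_nn: "good n t \<Longrightarrow> 0 \<le> t x" unfolding good_def by blast
lemma good_out: "good n t \<Longrightarrow> x \<notin> arcs n \<Longrightarrow> t x = 0" unfolding good_def by blast
lemma good_adm: "good n t \<Longrightarrow> supp n t \<noteq> {} \<Longrightarrow> admissible n (supp n t)" unfolding good_def by blast

lemma finite_supp: "finite (supp n t)"
  by (rule finite_subset[OF _ finite_arcs]) (auto simp: supp_def)

lemma good_zero: "good n t \<Longrightarrow> x \<notin> supp n t \<Longrightarrow> t x = 0"
proof -
  assume g: "good n t" and x: "x \<notin> supp n t"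
  show "t x = 0"
  proof (cases "x \<in> arcs n")
    case True
    then have "\<not> 0 < t x" using x by (simp add: supp_def)
    moreover have "0 \<le> t x" using g by (rule good_nn)
    ultimately show ?thesis by linarith
  next
    case False then show ?thesis using g good_out by blast
  qed
qed

lemma cover_supp: assumes "good n t" shows "cover n t k = sum t {x \<in> supp n t. k \<in> arc_verts n x}"
proof -
  have fin: "finite {x\<in>arcs n. k \<in> arc_verts n x}" using finite_arcs by simp
  have sub: "{x\<in>supp n t. k\<in>arc_verts n x} \<subseteq> {x\<in>arcs n. k \<in> arc_verts n x}" by (auto simp: supp_def)
  have "\<forall>x \<in> {x\<in>arcs n. k\<in>arc_verts n x} - {x\<in>supp n t. k \<in> arc_verts n x}. t x = 0"
    using good_zero[OF assms] by blast
  then show ?thesis unfolding cover_def by (rule sum.mono_neutral_right[OF fin sub])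
qed

lemma sum_mono_sub: assumes "good n t" "A \<subseteq> B" "finite B" shows "sum t A \<le> sum t B"
  using sum_mono2[OF assms(3) assms(2)] good_nn[OF assms(1)] by blast





lemma exists_min: fixes f :: "'a \<Rightarrow> nat" shows "finite S \<Longrightarrow> S \<noteq> {} \<Longrightarrow> \<exists>x\<in>S. \<forall>y\<in>S. f x \<le> f y"
proof (induction rule: finite_ne_induct)
  case (singleton x) then show ?case by simp
next
  case (insert x F)
  then obtain z where "z \<in> F" "\<forall>y\<in>F. f z \<le> f y" by blast
  show ?case
  proof (cases "f x \<le> f z")
    case True
    then have "\<forall>y\<in>insert x F. f x \<le> f y" using \<open>\<forall>y\<in>F. f z \<le> f y\<close> by (auto intro: order.trans)
    then show ?thesis by blast
  next
    case False
    then have "\<forall>y\<in>insert x F. f z \<le> f y" using \<open>\<forall>y\<in>F. f z \<le> f y\<close> by auto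
    then show ?thesis using \<open>z \<in> F\<close> by blast
  qed
qed

lemma key_lemma:
  assumes g: "good n t" and g': "good n t'" and cv: "\<And>k. cover n t k = cover n t' k"
    and ne: "supp n t \<noteq> {}"
  shows "\<exists>x. 0 < t x \<and> 0 < t' x"
proof -
  define \<sigma> where "\<sigma> = supp n t"
  define \<sigma>' where "\<sigma>' = supp n t'"
  have adm: "admissible n \<sigma>" using g ne by (simp add: good_def \<sigma>_def)
  have fin: "finite \<sigma>" "finite \<sigma>'" by (simp_all add: \<sigma>_def \<sigma>'_def finite_supp)
  have sarcs: "\<sigma> \<subseteq> arcs n" "\<sigma>' \<subseteq> arcs n" by (auto simp: \<sigma>_def \<sigma>'_def supp_def)
  have nn: "\<And>x. 0 \<le> t x" "\<And>x. 0 \<le> t' x" using g g' by (auto simp: good_def)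
  obtain x where x\<sigma>: "x \<in> \<sigma>" and xmin: "\<And>y. y \<in> \<sigma> \<Longrightarrow> card (arc_verts n x) \<le> card (arc_verts n y)"
    using exists_min[of \<sigma> "\<lambda>x. card (arc_verts n x)"] fin ne \<sigma>_def by blast
  have xarc: "x \<in> arcs n" using x\<sigma> sarcs by auto
  obtain a b where xab: "x = (a,b)" by fastforce
  have finav: "\<And>y. y \<in> arcs n \<Longrightarrow> finite (arc_verts n y)"
    by (metis av_sub finite_lessThan finite_subset prod.collapse)
  have rel: "AV_x \<subset> arc_verts n y \<or> (arc_verts n x \<inter> arc_verts n y = {} \<and> snd x \<noteq> fst y \<and> snd y \<noteq> fst x)"
    if "y \<in> \<sigma>" "y \<noteq> x" "AV_x = arc_verts n x" for y AV_x
  proof -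
    have "\<not> arc_verts n y \<subset> arc_verts n x"
      using xmin[OF that(1)] psubset_card_mono finav sarcs xarc that(1) by (meson leD subsetD)
    then show ?thesis using adm_pair[OF adm x\<sigma> that(1)] that by metis
  qed
  define A where "A = sum t {y \<in> \<sigma>. arc_verts n x \<subset> arc_verts n y}"
  have cov\<sigma>: "cover n t k = sum t {y \<in> \<sigma>. k \<in> arc_verts n y}" for k
    using cover_supp[OF g] \<sigma>_def by simp
  have cov\<sigma>': "cover n t' k = sum t' {y \<in> \<sigma>'. k \<in> arc_verts n y}" for k
    using cover_supp[OF g'] \<sigma>'_def by simp
  have onx: "cover n t k = t x + A" if k: "k \<in> arc_verts n x" for k
  proof -
    have "{y \<in> \<sigma>. k \<in> arc_verts n y} = insert x {y \<in> \<sigma>. arc_verts n x \<subset> arc_verts n y}"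
    proof (intro set_eqI iffI)
      fix y assume y: "y \<in> {y \<in> \<sigma>. k \<in> arc_verts n y}"
      show "y \<in> insert x {y \<in> \<sigma>. arc_verts n x \<subset> arc_verts n y}"
        using rel[of y "arc_verts n x"] y k by auto
    next
      fix y assume "y \<in> insert x {y \<in> \<sigma>. arc_verts n x \<subset> arc_verts n y}"
      then show "y \<in> {y \<in> \<sigma>. k \<in> arc_verts n y}" using k x\<sigma> by auto
    qed
    moreover have "x \<notin> {y \<in> \<sigma>. arc_verts n x \<subset> arc_verts n y}" by auto
    ultimately show ?thesis using cov\<sigma>[of k] fin A_def by simp
  qed
  have tx: "0 < t x" using x\<sigma> by (simp add: \<sigma>_def supp_def)
  have an: "a < n" "b < n" using arcsD xarc xab by auto
  have c_def: "cover n t a = t x + A" using onx src_in xarc xab by simp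
  have prA: "cover n t (pr n a) \<le> A"
  proof -
    have "{y \<in> \<sigma>. pr n a \<in> arc_verts n y} \<subseteq> {y \<in> \<sigma>. arc_verts n x \<subset> arc_verts n y}"
    proof (rule subsetI)
      fix y assume "y \<in> {y \<in> \<sigma>. pr n a \<in> arc_verts n y}"
      then have y: "y \<in> \<sigma>" "pr n a \<in> arc_verts n y" by auto
      have "y \<noteq> x" using y pr_src_notin xarc xab by auto
      moreover have "\<not> (arc_verts n x \<inter> arc_verts n y = {} \<and> snd y \<noteq> fst x)"
      proof
        assume h: "arc_verts n x \<inter> arc_verts n y = {} \<and> snd y \<noteq> fst x"
        have "a \<notin> arc_verts n y" using h src_in xarc xab by auto
        then have "a = snd y" using leave[of "fst y" "snd y" n a] y sarcs an by auto
        then show False using h xab by simp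
      qed
      ultimately have "arc_verts n x \<subset> arc_verts n y" using rel[OF y(1)] by blast
      then show "y \<in> {y \<in> \<sigma>. arc_verts n x \<subset> arc_verts n y}" using y by blast
    qed
    moreover have "finite {y \<in> \<sigma>. arc_verts n x \<subset> arc_verts n y}" using fin(1) by simp
    ultimately have "sum t {y \<in> \<sigma>. pr n a \<in> arc_verts n y} \<le> A" unfolding A_def by (rule sum_mono_sub[OF g])
    then show ?thesis using cov\<sigma>[of "pr n a"] by simp
  qed
  have bA: "cover n t b \<le> A"
  proof -
    have "{y \<in> \<sigma>. b \<in> arc_verts n y} \<subseteq> {y \<in> \<sigma>. arc_verts n x \<subset> arc_verts n y}"
    proof (rule subsetI)
      fix y assume "y \<in> {y \<in> \<sigma>. b \<in> arc_verts n y}"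
      then have y: "y \<in> \<sigma>" "b \<in> arc_verts n y" by auto
      have "y \<noteq> x" using y snk_notin xarc xab by auto
      moreover have "\<not> (arc_verts n x \<inter> arc_verts n y = {} \<and> snd x \<noteq> fst y)"
      proof
        assume h: "arc_verts n x \<inter> arc_verts n y = {} \<and> snd x \<noteq> fst y"
        have "pr n b \<notin> arc_verts n y" using h pr_snk_in xarc xab by auto
        then have "b = fst y" using enter[of "fst y" "snd y" n b] y sarcs by auto
        then show False using h xab by simp
      qed
      ultimately have "arc_verts n x \<subset> arc_verts n y" using rel[OF y(1)] by blast
      then show "y \<in> {y \<in> \<sigma>. arc_verts n x \<subset> arc_verts n y}" using y by blast
    qed
    moreover have "finite {y \<in> \<sigma>. arc_verts n x \<subset> arc_verts n y}" using fin(1) by simp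
    ultimately have "sum t {y \<in> \<sigma>. b \<in> arc_verts n y} \<le> A" unfolding A_def by (rule sum_mono_sub[OF g])
    then show ?thesis using cov\<sigma>[of "b"] by simp
  qed
  define W where "W = {w \<in> \<sigma>'. a \<in> arc_verts n w}"
  have finW: "finite W" using fin by (simp add: W_def)
  have "0 \<le> cover n t (pr n a)" unfolding cover_def by (rule sum_nonneg) (rule good_nn[OF g])
  then have "cover n t' a > 0" using cv[of a] c_def tx prA by linarith
  then have Wne: "W \<noteq> {}" using cov\<sigma>' W_def by force
  obtain w0 where w0W: "w0 \<in> W" and w0min: "\<And>w. w \<in> W \<Longrightarrow> card (arc_verts n w0) \<le> card (arc_verts n w)"
    using exists_min[of W "\<lambda>x. card (arc_verts n x)"] finW Wne by blast
  have "\<sigma>' \<noteq> {}" using Wne W_def by auto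
  then have adm': "admissible n \<sigma>'" using good_adm[OF g'] \<sigma>'_def by simp
  have w0arc: "w0 \<in> arcs n" using w0W sarcs W_def by auto
  have w0sub: "arc_verts n w0 \<subseteq> arc_verts n w" if w: "w \<in> W" for w
  proof (cases "w = w0")
    case False
    have "a \<in> arc_verts n w0 \<inter> arc_verts n w" using w w0W W_def by auto
    then have "arc_verts n w0 \<subset> arc_verts n w \<or> arc_verts n w \<subset> arc_verts n w0"
      using adm_pair[OF adm', of w0 w] w w0W W_def False by auto
    moreover have "\<not> arc_verts n w \<subset> arc_verts n w0"
      using w0min[OF w] psubset_card_mono finav w0arc by (meson leD)
    ultimately show ?thesis by blast
  qed simp
  have "\<exists>w1 \<in> \<sigma>'. a \<in> arc_verts n w1 \<and> pr n a \<notin> arc_verts n w1"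
  proof (rule ccontr)
    assume "\<not> ?thesis"
    then have "{w \<in> \<sigma>'. a \<in> arc_verts n w} \<subseteq> {w \<in> \<sigma>'. pr n a \<in> arc_verts n w}" by auto
    moreover have "finite {w \<in> \<sigma>'. pr n a \<in> arc_verts n w}" using fin(2) by simp
    ultimately have "sum t' {w \<in> \<sigma>'. a \<in> arc_verts n w} \<le> sum t' {w \<in> \<sigma>'. pr n a \<in> arc_verts n w}"
      by (rule sum_mono_sub[OF g'])
    then have "cover n t' a \<le> cover n t' (pr n a)" using cov\<sigma>' by simp
    then show False using cv[of a] cv[of "pr n a"] c_def prA tx by linarith
  qed
  then obtain w1 where w1: "w1 \<in> W" "pr n a \<notin> arc_verts n w1" by (auto simp: W_def)
  have "pr n a \<notin> arc_verts n w0" "a \<in> arc_verts n w0" using w0sub[OF w1(1)] w1(2) w0W W_def by auto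
  then have a0: "fst w0 = a" using enter[of "fst w0" "snd w0" n a] w0arc by auto
  obtain b0 where w0ab: "w0 = (a,b0)" using a0 by (metis prod.collapse)
  have geq: "cover n t' a \<le> cover n t' k" if k: "k \<in> arc_verts n w0" for k
  proof -
    have "W \<subseteq> {w \<in> \<sigma>'. k \<in> arc_verts n w}" using w0sub k W_def by auto
    moreover have "finite {w \<in> \<sigma>'. k \<in> arc_verts n w}" using fin(2) by simp
    ultimately have "sum t' W \<le> sum t' {w \<in> \<sigma>'. k \<in> arc_verts n w}" by (rule sum_mono_sub[OF g'])
    then show ?thesis using cov\<sigma>' W_def by simp
  qed
  have w0a: "(a,b0) \<in> arcs n" using w0arc w0ab by simp
  have xa: "(a,b) \<in> arcs n" using xarc xab by simp
  have "arc_verts n w0 = arc_verts n x"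
  proof (rule ccontr)
    assume neq: "arc_verts n w0 \<noteq> arc_verts n x"
    from same_src[OF xa w0a] neq xab w0ab consider "arc_verts n (a,b) \<subset> arc_verts n (a,b0)"
      | "arc_verts n (a,b0) \<subset> arc_verts n (a,b)" by auto
    then show False
    proof cases
      case 1
      then have "b \<in> arc_verts n w0" using same_src_snk[OF xa w0a] w0ab by simp
      then have "cover n t' a \<le> cover n t' b" using geq by simp
      then show False using cv[of a] cv[of b] c_def bA tx by linarith
    next
      case 2
      have b0x: "b0 \<in> arc_verts n x" using same_src_snk[OF w0a xa] 2 xab by simp
      have pb0x: "pr n b0 \<in> arc_verts n x" using pr_snk_in[OF w0a] 2 xab by auto
      have eq: "cover n t' b0 = cover n t' (pr n b0)" using onx[OF b0x] onx[OF pb0x] cv[of b0] cv[of "pr n b0"] by simp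
      have b0n: "b0 < n" using arcsD[OF w0a] by simp
      have "\<exists>w2 \<in> \<sigma>'. b0 \<in> arc_verts n w2 \<and> pr n b0 \<notin> arc_verts n w2"
      proof (rule ccontr)
        assume "\<not> ?thesis"
        then have sub: "{w \<in> \<sigma>'. b0 \<in> arc_verts n w} \<subseteq> {w \<in> \<sigma>'. pr n b0 \<in> arc_verts n w} - {w0}"
          using snk_notin[OF w0a] w0ab by auto
        have w0in: "w0 \<in> {w \<in> \<sigma>'. pr n b0 \<in> arc_verts n w}" using pr_snk_in[OF w0a] w0ab w0W W_def by auto
        have finP: "finite ({w \<in> \<sigma>'. pr n b0 \<in> arc_verts n w} - {w0})" using fin(2) by simp
        have "sum t' {w \<in> \<sigma>'. b0 \<in> arc_verts n w} \<le> sum t' ({w \<in> \<sigma>'. pr n b0 \<in> arc_verts n w} - {w0})"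
          using sub finP by (rule sum_mono_sub[OF g'])
        also have "\<dots> = sum t' {w \<in> \<sigma>'. pr n b0 \<in> arc_verts n w} - t' w0"
          using w0in fin(2) by (simp add: sum_diff1)
        finally have "cover n t' b0 \<le> cover n t' (pr n b0) - t' w0" using cov\<sigma>' by simp
        moreover have "0 < t' w0" using w0W W_def by (simp add: \<sigma>'_def supp_def)
        ultimately show False using eq by linarith
      qed
      then obtain w2 where w2: "w2 \<in> \<sigma>'" "b0 \<in> arc_verts n w2" "pr n b0 \<notin> arc_verts n w2" by blast
      have w2arc: "w2 \<in> arcs n" using w2 sarcs by auto
      have fw2: "fst w2 = b0" using enter[of "fst w2" "snd w2" n b0] w2 w2arc by auto
      have "w2 \<noteq> w0"
      proof
        assume "w2 = w0"
        then have "b0 = a" using fw2 w0ab by simp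
        then show False using arcsD[OF w0a] by simp
      qed
      from adm_pair[OF adm' w0W[unfolded W_def, THEN CollectD, THEN conjunct1] w2(1) this[symmetric]]
      show False
      proof
        assume h: "arc_verts n w0 \<inter> arc_verts n w2 \<noteq> {} \<and> (arc_verts n w0 \<subset> arc_verts n w2 \<or> arc_verts n w2 \<subset> arc_verts n w0)"
        then have "arc_verts n w0 \<subseteq> arc_verts n w2 \<or> arc_verts n w2 \<subseteq> arc_verts n w0" by blast
        then show False using nested_no_chain(1)[OF w0arc w2arc] nested_no_chain(2)[OF w2arc w0arc] fw2 w0ab
          by auto
      next
        assume h: "arc_verts n w0 \<inter> arc_verts n w2 = {} \<and> snd w0 \<noteq> fst w2 \<and> snd w2 \<noteq> fst w0"
        then show False using fw2 w0ab by simp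
      qed
    qed
  qed
  then have "w0 = x" using av_inj w0arc xarc by blast
  then have "0 < t' x" using w0W W_def by (simp add: \<sigma>'_def supp_def)
  then show ?thesis using tx by blast
qed

lemma sum_upd: assumes "finite S" shows "sum (t(x := v)) S = sum t S + (if x \<in> S then v - t x else (0::real))"
proof (cases "x \<in> S")
  case True
  have "sum (t(x := v)) S = (t(x:=v)) x + sum (t(x := v)) (S - {x})" using sum.remove[OF assms True] by blast
  also have "sum (t(x := v)) (S - {x}) = sum t (S - {x})" by (rule sum.cong) auto
  also have "sum t S = t x + sum t (S - {x})" using sum.remove[OF assms True] by blast
  ultimately show ?thesis using True by simp
next
  case False
  have "sum (t(x := v)) S = sum t S" by (rule sum.cong) (use False in auto)
  then show ?thesis using False by simp
qed

lemma cover_upd: "cover n (t(x := v)) k = cover n t k + (if x \<in> arcs n \<and> k \<in> arc_verts n x then v - t x else 0)"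
  unfolding cover_def using sum_upd[of "{x \<in> arcs n. k \<in> arc_verts n x}" t x v] finite_arcs by simp

lemma good_pos_arc: "good n t \<Longrightarrow> 0 < t x \<Longrightarrow> x \<in> arcs n"
  using good_out by fastforce

lemma good_dec: assumes g: "good n t" and x: "0 < t x" and m: "0 \<le> m" "m \<le> t x"
  shows "good n (t(x := t x - m))" and "supp n (t(x := t x - m)) \<subseteq> supp n t"
    and "m = t x \<Longrightarrow> x \<notin> supp n (t(x := t x - m))"
proof -
  show sub: "supp n (t(x := t x - m)) \<subseteq> supp n t" using x by (auto simp: supp_def)
  show "m = t x \<Longrightarrow> x \<notin> supp n (t(x := t x - m))" by (simp add: supp_def)
  have xa: "x \<in> arcs n" using good_pos_arc[OF g x] .
  have "\<forall>y. 0 \<le> (t(x := t x - m)) y" using good_nn[OF g] m by simp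
  moreover have "\<forall>y. y \<notin> arcs n \<longrightarrow> (t(x := t x - m)) y = 0" using good_out[OF g] xa by auto
  moreover have "supp n (t(x := t x - m)) \<noteq> {} \<longrightarrow> admissible n (supp n (t(x := t x - m)))"
  proof
    assume ne: "supp n (t(x := t x - m)) \<noteq> {}"
    then have "supp n t \<noteq> {}" using sub by blast
    then show "admissible n (supp n (t(x := t x - m)))" using adm_sub good_adm[OF g] sub ne by blast
  qed
  ultimately show "good n (t(x := t x - m))" unfolding good_def by blast
qed

lemma uniq_aux:
  "card (supp n t) + card (supp n t') = N \<Longrightarrow> good n t \<Longrightarrow> good n t' \<Longrightarrow> (\<And>k. cover n t k = cover n t' k) \<Longrightarrow> t = t'"
proof (induction N arbitrary: t t' rule: less_induct)
  case (less N)
  show ?case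
  proof (cases "supp n t = {} \<and> supp n t' = {}")
    case True
    then show ?thesis using good_zero[OF less(3)] good_zero[OF less(4)] by auto
  next
    case False
    obtain x where x: "0 < t x" "0 < t' x"
    proof (cases "supp n t = {}")
      case True
      then have "supp n t' \<noteq> {}" using False by blast
      then show ?thesis using key_lemma[OF less(4) less(3) _] less(5) that by fastforce
    next
      case False
      then show ?thesis using key_lemma[OF less(3) less(4) less(5)] that by blast
    qed
    define m where "m = min (t x) (t' x)"
    define t1 where "t1 = t(x := t x - m)"
    define t1' where "t1' = t'(x := t' x - m)"
    have m: "0 \<le> m" "m \<le> t x" "m \<le> t' x" using x by (auto simp: m_def)
    note d1 = good_dec[OF less(3) x(1) m(1,2), folded t1_def]
    note d2 = good_dec[OF less(4) x(2) m(1,3), folded t1'_def]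
    have cv: "cover n t1 k = cover n t1' k" for k
      unfolding t1_def t1'_def cover_upd using less(5)[of k] by simp
    have fs: "finite (supp n t)" "finite (supp n t')" by (simp_all add: finite_supp)
    have "card (supp n t1) + card (supp n t1') < N"
    proof (cases "m = t x")
      case True
      have "x \<in> supp n t" using x(1) good_pos_arc[OF less(3) x(1)] by (simp add: supp_def)
      then have "supp n t1 \<subset> supp n t" using d1(2) d1(3)[OF True] by blast
      then have "card (supp n t1) < card (supp n t)" using psubset_card_mono fs by blast
      moreover have "card (supp n t1') \<le> card (supp n t')" using card_mono d2 fs by blast
      ultimately show ?thesis using less(2) by linarith
    next
      case False
      then have "m = t' x" by (auto simp: m_def)
      have "x \<in> supp n t'" using x(2) good_pos_arc[OF less(4) x(2)] by (simp add: supp_def)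
      then have "supp n t1' \<subset> supp n t'" using d2(2) d2(3)[OF \<open>m = t' x\<close>] by blast
      then have "card (supp n t1') < card (supp n t')" using psubset_card_mono fs by blast
      moreover have "card (supp n t1) \<le> card (supp n t)" using card_mono d1 fs by blast
      ultimately show ?thesis using less(2) by linarith
    qed
    then have "t1 = t1'" using less(1)[OF _ refl d1(1) d2(1) cv] by blast
    then have "t1 x = t1' x" "\<And>y. y \<noteq> x \<Longrightarrow> t1 y = t1' y" by auto
    then have e1: "t x = t' x" and e2: "\<And>y. y \<noteq> x \<Longrightarrow> t y = t' y" unfolding t1_def t1'_def
      by (auto split: if_splits)
    show "t = t'"
    proof
      fix y show "t y = t' y" using e1 e2[of y] by (cases "y = x") auto
    qed
  qed
qed

lemma uniq: "good n t \<Longrightarrow> good n t' \<Longrightarrow> (\<And>k. cover n t k = cover n t' k) \<Longrightarrow> t = t'"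
  using uniq_aux by blast




definition lcomp :: "nat \<Rightarrow> (nat \<Rightarrow> real) \<Rightarrow> nat \<times> nat \<Rightarrow> real \<Rightarrow> bool" where
  "lcomp n F x c \<longleftrightarrow> x \<in> arcs n \<and> 0 < c \<and> (\<forall>k\<in>arc_verts n x. c \<le> F k) \<and> F (pr n (fst x)) < c \<and> F (snd x) < c"

lemma comp_nest:
  assumes x: "lcomp n F x c" and y: "lcomp n F y c'" and cc: "c \<le> c'" and int: "arc_verts n x \<inter> arc_verts n y \<noteq> {}"
  shows "arc_verts n y \<subseteq> arc_verts n x"
proof (rule ccontr)
  assume "\<not> ?thesis"
  then obtain k where k: "k \<in> arc_verts n y" "k \<notin> arc_verts n x" by blast
  obtain m where m: "m \<in> arc_verts n x \<inter> arc_verts n y" using int by blast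
  have xa: "x \<in> arcs n" and ya: "y \<in> arcs n" using x y by (auto simp: lcomp_def)
  from exit_lemma[OF xa ya m k] show False
  proof
    assume "snd x \<in> arc_verts n y"
    then have "c' \<le> F (snd x)" using y by (auto simp: lcomp_def)
    then show False using x cc by (auto simp: lcomp_def)
  next
    assume "pr n (fst x) \<in> arc_verts n y"
    then have "c' \<le> F (pr n (fst x))" using y by (auto simp: lcomp_def)
    then show False using x cc by (auto simp: lcomp_def)
  qed
qed

lemma comp_disj:
  assumes x: "lcomp n F x c" and y: "lcomp n F y c'" and cc: "c \<le> c'"
  shows "snd x \<noteq> fst y" "snd y \<noteq> fst x"
proof -
  have xa: "x \<in> arcs n" and ya: "y \<in> arcs n" using x y by (auto simp: lcomp_def)
  have "fst y \<in> arc_verts n y" using src_in[of "fst y" "snd y" n] ya by simp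
  then have "c' \<le> F (fst y)" using y by (auto simp: lcomp_def)
  then show "snd x \<noteq> fst y" using x cc by (auto simp: lcomp_def)
  show "snd y \<noteq> fst x"
  proof
    assume e: "snd y = fst x"
    have "pr n (snd y) \<in> arc_verts n y" using pr_snk_in[of "fst y" "snd y" n] ya by simp
    then have "c' \<le> F (pr n (fst x))" using y e by (auto simp: lcomp_def)
    then show False using x cc by (auto simp: lcomp_def)
  qed
qed

lemma comps_adm:
  assumes fin: "finite S" and ne: "S \<noteq> {}" and cs: "\<And>x. x \<in> S \<Longrightarrow> \<exists>c. lcomp n F x c"
  shows "admissible n S"
proof -
  have sub: "S \<subseteq> arcs n" using cs by (auto simp: lcomp_def)
  have pair: "(arc_verts n I \<inter> arc_verts n J \<noteq> {} \<and> (arc_verts n I \<subset> arc_verts n J \<or> arc_verts n J \<subset> arc_verts n I))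
      \<or> (arc_verts n I \<inter> arc_verts n J = {} \<and> snd I \<noteq> fst J \<and> snd J \<noteq> fst I)"
    if IJ: "I \<in> S" "J \<in> S" "I \<noteq> J" for I J
  proof -
    obtain c where cI: "lcomp n F I c" using cs IJ by blast
    obtain c' where cJ: "lcomp n F J c'" using cs IJ by blast
    have neq: "arc_verts n I \<noteq> arc_verts n J" using av_inj sub IJ by blast
    show ?thesis
    proof (cases "arc_verts n I \<inter> arc_verts n J = {}")
      case True
      show ?thesis
      proof (cases "c \<le> c'")
        case True
        then show ?thesis using comp_disj[OF cI cJ] \<open>arc_verts n I \<inter> arc_verts n J = {}\<close> by blast
      next
        case False
        then have "c' \<le> c" by simp
        then show ?thesis using comp_disj[OF cJ cI] \<open>arc_verts n I \<inter> arc_verts n J = {}\<close> by blast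
      qed
    next
      case False
      show ?thesis
      proof (cases "c \<le> c'")
        case True
        then have "arc_verts n J \<subseteq> arc_verts n I" using comp_nest[OF cI cJ] False by blast
        then show ?thesis using neq False by blast
      next
        case F2: False
        then have "c' \<le> c" by simp
        then have "arc_verts n I \<subseteq> arc_verts n J" using comp_nest[OF cJ cI] False by blast
        then show ?thesis using neq False by blast
      qed
    qed
  qed
  show ?thesis unfolding admissible_def using fin ne sub pair by blast
qed

lemma const_cycle:
  assumes "\<And>k. k < n \<Longrightarrow> F k = F (pr n k)" shows "\<And>k. k < n \<Longrightarrow> F k = F 0"
proof -
  have "j < n \<longrightarrow> F j = F 0" for j
  proof (induction j)
    case 0 then show ?case by simp
  next
    case (Suc j)
    show ?case
    proof
      assume j: "Suc j < n"
      have "pr n (Suc j) = j" using j by (simp add: pr_alt)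
      then show "F (Suc j) = F 0" using assms[OF j] Suc j by simp
    qed
  qed
  then show "\<And>k. k < n \<Longrightarrow> F k = F 0" by blast
qed

lemma comp_transfer:
  assumes P: "(a,b) \<in> arcs n" and F': "\<And>k. F' k = F k - (if k \<in> arc_verts n (a,b) then w else 0)"
    and w: "0 < w" and onP: "\<And>k. k \<in> arc_verts n (a,b) \<Longrightarrow> F' k = M - w"
    and pa: "F (pr n a) \<le> M - w" and pb: "F b \<le> M - w"
    and y: "lcomp n F' y c"
  shows "lcomp n F y c"
proof -
  have ya: "y \<in> arcs n" and c: "0 < c" and iny: "\<And>k. k \<in> arc_verts n y \<Longrightarrow> c \<le> F' k"
    and l1: "F' (pr n (fst y)) < c" and l2: "F' (snd y) < c" using y unfolding lcomp_def by auto
  have ge: "F' k \<le> F k" for k using F'[of k] w by auto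
  have yn: "fst y < n" "snd y < n" using arcsD[of "fst y" "snd y" n] ya by auto
  have fy: "fst y \<in> arc_verts n y" using src_in[of "fst y" "snd y" n] ya by simp
  have py: "pr n (snd y) \<in> arc_verts n y" using pr_snk_in[of "fst y" "snd y" n] ya by simp
  have notP_a: "pr n a \<notin> arc_verts n (a,b)" using pr_src_notin[OF P] .
  have notP_b: "b \<notin> arc_verts n (a,b)" using snk_notin[OF P] .
  have r1: "F (pr n (fst y)) < c"
  proof (cases "pr n (fst y) \<in> arc_verts n (a,b)")
    case False then show ?thesis using F'[of "pr n (fst y)"] l1 by simp
  next
    case True
    then have "M - w < c" using onP l1 by simp
    have "fst y \<notin> arc_verts n (a,b)"
    proof
      assume "fst y \<in> arc_verts n (a,b)"
      then have "F' (fst y) = M - w" using onP by simp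
      then show False using iny[OF fy] \<open>M - w < c\<close> by simp
    qed
    then have "fst y = b" using leave[OF P yn(1) _ True] by simp
    then have "F' (fst y) = F b" using F'[of b] notP_b by simp
    then show ?thesis using iny[OF fy] pb \<open>M - w < c\<close> by simp
  qed
  have r2: "F (snd y) < c"
  proof (cases "snd y \<in> arc_verts n (a,b)")
    case False then show ?thesis using F'[of "snd y"] l2 by simp
  next
    case True
    then have "M - w < c" using onP l2 by simp
    have "pr n (snd y) \<notin> arc_verts n (a,b)"
    proof
      assume "pr n (snd y) \<in> arc_verts n (a,b)"
      then have "F' (pr n (snd y)) = M - w" using onP by simp
      then show False using iny[OF py] \<open>M - w < c\<close> by simp
    qed
    then have "snd y = a" using enter[OF P True] by simp
    then have "F' (pr n (snd y)) = F (pr n a)" using F'[of "pr n a"] notP_a by simp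
    then show ?thesis using iny[OF py] pa \<open>M - w < c\<close> by simp
  qed
  show ?thesis unfolding lcomp_def using ya c iny ge r1 r2 by (meson order.trans)
qed

lemma peel_aux:
  "card {k. k < n \<and> F k \<noteq> F (pr n k)} = N \<Longrightarrow> 0 < n \<Longrightarrow> (\<forall>k<n. 0 \<le> F k) \<Longrightarrow> (\<exists>k<n. F k = 0) \<Longrightarrow>
   \<exists>t. (\<forall>x. 0 \<le> t x) \<and> (\<forall>x. x \<notin> arcs n \<longrightarrow> t x = 0) \<and> (\<forall>x. 0 < t x \<longrightarrow> (\<exists>c. lcomp n F x c))
        \<and> (\<forall>k<n. cover n t k = F k)"
proof (induction N arbitrary: F rule: less_induct)
  case (less N)
  define Bd where "Bd G = {k. k < n \<and> G k \<noteq> G (pr n k)}" for G :: "nat \<Rightarrow> real"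
  obtain kz where kz: "kz < n" "F kz = 0" using less(5) by blast
  show ?case
  proof (cases "Bd F = {}")
    case True
    then have "\<And>k. k < n \<Longrightarrow> F k = F (pr n k)" by (auto simp: Bd_def)
    then have "\<And>k. k < n \<Longrightarrow> F k = F 0" using const_cycle by blast
    then have z: "\<And>k. k < n \<Longrightarrow> F k = 0" using kz by metis
    show ?thesis
      by (rule exI[of _ "\<lambda>_. 0"]) (simp add: z cover_def)
  next
    case False
    then obtain kb where kb: "kb < n" "F kb \<noteq> F (pr n kb)" by (auto simp: Bd_def)
    define M where "M = Max (F ` {..<n})"
    have Mge: "\<And>k. k < n \<Longrightarrow> F k \<le> M" unfolding M_def by (rule Max_ge) auto
    obtain k0 where k0: "k0 < n" "F k0 = M"
      using Max_in[of "F ` {..<n}"] less(3) unfolding M_def by fastforce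
    obtain k1 where k1: "k1 < n" "F k1 \<noteq> M"
      using kb pr_lt[OF kb(1)] by metis
    have Mpos: "0 < M" using Mge[OF k1(1)] k1 less(4) by force
    define P where "P j = (F ((k1 + j) mod n) = M)" for j
    have nP0: "\<not> P 0" using k1 by (simp add: P_def)
    have Pj0: "P (pos n k1 k0)" using pos_inv[OF k0(1) k1(1)] k0 by (simp add: P_def)
    have j0: "0 < pos n k1 k0" using nP0 Pj0 by (metis gr0I)
    obtain j where j: "j < pos n k1 k0" "\<not> P j" "P (Suc j)"
      using walk[of "\<lambda>j. \<not> P j", OF nP0 _ j0] Pj0 by blast
    define a where "a = (k1 + (j+1)) mod n"
    have jn: "j + 1 < n" using j pos_lt[OF less(3), of k1 k0] by linarith
    have an: "a < n" using less(3) by (simp add: a_def)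
    have Fa: "F a = M" using j by (simp add: P_def a_def)
    have pra: "pr n a = (k1 + j) mod n" using pr_step[OF jn k1(1)] by (simp add: a_def)
    have Fpa: "F (pr n a) < M" using j pra Mge[OF pr_lt[OF an]] by (simp add: P_def)
    define Q where "Q i = (F ((a + i) mod n) \<noteq> M)" for i
    have Qk1: "Q (pos n a k1)" using pos_inv[OF k1(1) an] k1 by (simp add: Q_def)
    define js where "js = (LEAST i. Q i)"
    have Qjs: "Q js" using LeastI[of Q, OF Qk1] by (simp add: js_def)
    have jsle: "js \<le> pos n a k1" using Least_le[of Q, OF Qk1] by (simp add: js_def)
    have jsn: "js < n" using jsle pos_lt[OF less(3), of a k1] by linarith
    have nQ: "\<And>i. i < js \<Longrightarrow> \<not> Q i" using not_less_Least by (simp add: js_def)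
    have js0: "js \<noteq> 0"
    proof
      assume "js = 0"
      then show False using Qjs Fa an by (simp add: Q_def)
    qed
    define b where "b = (a + js) mod n"
    have bn: "b < n" using less(3) by (simp add: b_def)
    have posb: "pos n a b = js" using pos_of[OF jsn an] by (simp add: b_def)
    have ab: "a \<noteq> b" using posb js0 pos_self[OF an] by auto
    have Parc: "(a,b) \<in> arcs n" using an bn ab by (simp add: arcs_def)
    have Fb: "F b < M" using Qjs Mge[OF bn] by (simp add: Q_def b_def)
    have onP: "F k = M" if k: "k \<in> arc_verts n (a,b)" for k
    proof -
      have "k < n" "pos n a k < js" using k av_mem[OF Parc] posb by auto
      then show ?thesis using nQ[of "pos n a k"] pos_inv[of k n a] an by (simp add: Q_def)
    qed
    define w where "w = M - max (F (pr n a)) (F b)"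
    have w: "0 < w" using Fpa Fb by (simp add: w_def)
    define F' where "F' k = F k - (if k \<in> arc_verts n (a,b) then w else 0)" for k
    have onP': "\<And>k. k \<in> arc_verts n (a,b) \<Longrightarrow> F' k = M - w" using onP by (simp add: F'_def)
    have nn': "\<forall>k<n. 0 \<le> F' k"
    proof (intro allI impI)
      fix k assume k: "k < n"
      show "0 \<le> F' k"
      proof (cases "k \<in> arc_verts n (a,b)")
        case True
        then have "F' k = max (F (pr n a)) (F b)" using onP' by (simp add: w_def)
        then show ?thesis using less(4) pr_lt[OF an] by (simp add: le_max_iff_disj)
      next
        case False then show ?thesis using less(4) k by (simp add: F'_def)
      qed
    qed
    have z': "\<exists>k<n. F' k = 0"
    proof -
      have "kz \<notin> arc_verts n (a,b)" using onP kz Mpos by fastforce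
      then show ?thesis using kz by (auto simp: F'_def)
    qed
    have aB: "a \<in> Bd F" using an Fa Fpa by (simp add: Bd_def)
    have prb: "pr n b \<in> arc_verts n (a,b)" using pr_snk_in[OF Parc] .
    have bB: "b \<in> Bd F" using bn Fb onP[OF prb] by (simp add: Bd_def)
    have sub: "Bd F' \<subseteq> Bd F"
    proof
      fix k assume k: "k \<in> Bd F'"
      then have kn: "k < n" and d: "F' k \<noteq> F' (pr n k)" by (auto simp: Bd_def)
      consider "k \<in> arc_verts n (a,b) \<longleftrightarrow> pr n k \<in> arc_verts n (a,b)"
        | "k \<in> arc_verts n (a,b)" "pr n k \<notin> arc_verts n (a,b)"
        | "k \<notin> arc_verts n (a,b)" "pr n k \<in> arc_verts n (a,b)" by blast
      then show "k \<in> Bd F"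
      proof cases
        case 1 then show ?thesis using kn d by (auto simp: Bd_def F'_def)
      next
        case 2 then show ?thesis using enter[OF Parc] aB by blast
      next
        case 3 then show ?thesis using leave[OF Parc kn] bB by blast
      qed
    qed
    have "a \<notin> Bd F' \<or> b \<notin> Bd F'"
    proof (cases "F b \<le> F (pr n a)")
      case True
      have "F' a = F (pr n a)" using onP'[OF src_in[OF Parc]] True by (simp add: w_def max_def)
      moreover have "F' (pr n a) = F (pr n a)" using pr_src_notin[OF Parc] by (simp add: F'_def)
      ultimately show ?thesis by (simp add: Bd_def)
    next
      case False
      have "F' (pr n b) = F b" using onP'[OF prb] False by (simp add: w_def max_def)
      moreover have "F' b = F b" using snk_notin[OF Parc] by (simp add: F'_def)
      ultimately show ?thesis by (simp add: Bd_def)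
    qed
    then have "Bd F' \<subset> Bd F" using sub aB bB by blast
    moreover have "finite (Bd F)" by (simp add: Bd_def)
    ultimately have "card (Bd F') < card (Bd F)" by (rule psubset_card_mono[rotated])
    then have "card (Bd F') < N" using less(2) by (simp add: Bd_def)
    then obtain t' where t': "\<forall>x. 0 \<le> t' x" "\<forall>x. x \<notin> arcs n \<longrightarrow> t' x = 0"
        "\<forall>x. 0 < t' x \<longrightarrow> (\<exists>c. lcomp n F' x c)" "\<forall>k<n. cover n t' k = F' k"
      using less(1)[OF _ refl less(3) nn' z'] unfolding Bd_def by blast
    define t where "t = t'((a,b) := t' (a,b) + w)"
    have "\<forall>x. 0 \<le> t x" using t'(1) w by (simp add: t_def add_nonneg_nonneg)
    moreover have "\<forall>x. x \<notin> arcs n \<longrightarrow> t x = 0" using t'(2) Parc by (auto simp: t_def)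
    moreover have "\<forall>k<n. cover n t k = F k"
      unfolding t_def cover_upd using t'(4) Parc by (simp add: F'_def)
    moreover have "\<forall>x. 0 < t x \<longrightarrow> (\<exists>c. lcomp n F x c)"
    proof (intro allI impI)
      fix x assume x: "0 < t x"
      show "\<exists>c. lcomp n F x c"
      proof (cases "x = (a,b)")
        case True
        have "lcomp n F (a,b) M" unfolding lcomp_def using Parc Mpos onP Fpa Fb by simp
        then show ?thesis using True by blast
      next
        case False
        then have "0 < t' x" using x by (simp add: t_def)
        then obtain c where cx: "lcomp n F' x c" using t'(3) by blast
        have "lcomp n F x c"
          by (rule comp_transfer[OF Parc _ w onP' _ _ cx]) (simp_all add: F'_def w_def)
        then show ?thesis by blast
      qed
    qed
    ultimately show ?thesis by blast
  qed
qed




definition N1 :: "real^'n::finite \<Rightarrow> real" where "N1 x = (\<Sum>i\<in>UNIV. \<bar>x $ i\<bar>)"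

lemma ee_nth: "inj_on v {..<n} \<Longrightarrow> i < n \<Longrightarrow> k < n \<Longrightarrow> ee v i $ v k = (if i = k then 1 else 0)"
  unfolding ee_def by (auto simp: axis_def inj_on_def)

lemma rv_nth: "inj_on v {..<n} \<Longrightarrow> x \<in> arcs n \<Longrightarrow> k < n \<Longrightarrow>
   root_vert v x $ v k = (if fst x = k then 1 else 0) - (if snd x = k then 1 else 0)"
  unfolding root_vert_def using ee_nth[of v n] arcsD[of "fst x" "snd x" n] by simp

lemma phi_nth: "inj_on v {..<n} \<Longrightarrow> k < n \<Longrightarrow>
   phi n v t $ v k = (\<Sum>x\<in>arcs n. t x * ((if fst x = k then 1 else 0) - (if snd x = k then 1 else 0)))"
  unfolding phi_def by (simp add: sum_component rv_nth)

lemma cover_ind: "cover n t k = (\<Sum>x\<in>arcs n. t x * (if k \<in> arc_verts n x then 1 else 0))"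
  unfolding cover_def using finite_arcs by (simp add: sum.inter_filter[symmetric] if_distrib cong: if_cong)

lemma ind_eq: assumes x: "x \<in> arcs n" and k: "k < n"
  shows "(if k \<in> arc_verts n x then 1 else 0) - (if pr n k \<in> arc_verts n x then 1 else (0::real))
         = (if fst x = k then 1 else 0) - (if snd x = k then 1 else 0)"
proof -
  obtain a b where xab: "x = (a,b)" by fastforce
  note xa = x[unfolded xab]
  have ab: "a \<noteq> b" using arcsD[OF xa] by simp
  consider "k = a" | "k = b" | "k \<noteq> a" "k \<noteq> b" by blast
  then show ?thesis
  proof cases
    case 1 then show ?thesis using src_in[OF xa] pr_src_notin[OF xa] ab xab by auto
  next
    case 2 then show ?thesis using snk_notin[OF xa] pr_snk_in[OF xa] ab xab by auto
  next
    case 3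
    have "k \<in> arc_verts n (a,b) \<longleftrightarrow> pr n k \<in> arc_verts n (a,b)"
      using enter[OF xa, of k] leave[OF xa k] 3 by blast
    then show ?thesis using 3 xab by simp
  qed
qed

lemma phi_cover: "inj_on v {..<n} \<Longrightarrow> k < n \<Longrightarrow> phi n v t $ v k = cover n t k - cover n t (pr n k)"
proof -
  assume inj: "inj_on v {..<n}" and k: "k < n"
  have "cover n t k - cover n t (pr n k) =
     (\<Sum>x\<in>arcs n. t x * ((if k \<in> arc_verts n x then 1 else 0) - (if pr n k \<in> arc_verts n x then 1 else 0)))"
    unfolding cover_ind by (simp add: sum_subtractf right_diff_distrib)
  also have "\<dots> = (\<Sum>x\<in>arcs n. t x * ((if fst x = k then 1 else 0) - (if snd x = k then 1 else 0)))"
    by (rule sum.cong[OF refl]) (simp add: ind_eq k)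
  finally show ?thesis using phi_nth[OF inj k] by simp
qed

lemma cover_ge: "n \<le> k \<Longrightarrow> cover n t k = 0"
  unfolding cover_def using av_sub by (fastforce intro: sum.neutral)

lemma sum_fst: fixes t :: "nat\<times>nat \<Rightarrow> real" shows "(\<Sum>k<n. \<Sum>x\<in>arcs n. t x * (if fst x = k then 1 else 0)) = (\<Sum>x\<in>arcs n. t x)"
proof -
  have "(\<Sum>k<n. \<Sum>x\<in>arcs n. t x * (if fst x = k then 1 else 0)) = (\<Sum>x\<in>arcs n. \<Sum>k<n. t x * (if fst x = k then 1 else 0))"
    by (rule sum.swap)
  also have "\<dots> = (\<Sum>x\<in>arcs n. t x)"
  proof (rule sum.cong[OF refl])
    fix x assume x: "x \<in> arcs n"
    have xn: "fst x < n" using arcsD[of "fst x" "snd x" n] x by simp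
    have "(\<Sum>k<n. t x * (if fst x = k then 1 else 0)) = (\<Sum>k<n. if fst x = k then t x else 0)"
      by (rule sum.cong) auto
    also have "\<dots> = t x" using xn by (subst sum.delta') auto
    finally show "(\<Sum>k<n. t x * (if fst x = k then 1 else 0)) = t x" .
  qed
  finally show ?thesis .
qed

lemma sum_snd: fixes t :: "nat\<times>nat \<Rightarrow> real" shows "(\<Sum>k<n. \<Sum>x\<in>arcs n. t x * (if snd x = k then 1 else 0)) = (\<Sum>x\<in>arcs n. t x)"
proof -
  have "(\<Sum>k<n. \<Sum>x\<in>arcs n. t x * (if snd x = k then 1 else 0)) = (\<Sum>x\<in>arcs n. \<Sum>k<n. t x * (if snd x = k then 1 else 0))"
    by (rule sum.swap)
  also have "\<dots> = (\<Sum>x\<in>arcs n. t x)"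
  proof (rule sum.cong[OF refl])
    fix x assume x: "x \<in> arcs n"
    have xn: "snd x < n" using arcsD[of "fst x" "snd x" n] x by simp
    have "(\<Sum>k<n. t x * (if snd x = k then 1 else 0)) = (\<Sum>k<n. if snd x = k then t x else 0)"
      by (rule sum.cong) auto
    also have "\<dots> = t x" using xn by (subst sum.delta') auto
    finally show "(\<Sum>k<n. t x * (if snd x = k then 1 else 0)) = t x" .
  qed
  finally show ?thesis .
qed

lemma pos_term: assumes g: "good n t" and p: "0 < (\<Sum>x\<in>arcs n. t x * (if P x then 1 else 0))"
  shows "\<exists>x\<in>supp n t. P x"
proof (rule ccontr)
  assume "\<not> ?thesis"
  have "\<forall>x\<in>arcs n. t x * (if P x then 1 else 0) = 0"
  proof
    fix x assume "x \<in> arcs n"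
    show "t x * (if P x then 1 else 0) = 0"
    proof (cases "P x")
      case True
      then have "x \<notin> supp n t" using \<open>\<not> (\<exists>x\<in>supp n t. P x)\<close> by blast
      then show ?thesis using good_zero[OF g] by simp
    qed simp
  qed
  then have "(\<Sum>x\<in>arcs n. t x * (if P x then 1 else 0)) = 0" by (intro sum.neutral) blast
  then show False using p by simp
qed

lemma N1_formula: assumes g: "good n t" and inj: "inj_on v {..<n}"
  shows "(\<Sum>k<n. \<bar>phi n v t $ v k\<bar>) = 2 * (\<Sum>x\<in>arcs n. t x)"
proof -
  define sa where "sa k = (\<Sum>x\<in>arcs n. t x * (if fst x = k then 1 else 0))" for k
  define sb where "sb k = (\<Sum>x\<in>arcs n. t x * (if snd x = k then 1 else 0))" for k
  have nn: "0 \<le> sa k" "0 \<le> sb k" for k unfolding sa_def sb_def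
    by (auto intro!: sum_nonneg simp: good_nn[OF g])
  have ph: "phi n v t $ v k = sa k - sb k" if "k < n" for k
    using phi_nth[OF inj that] by (simp add: sa_def sb_def sum_subtractf right_diff_distrib)
  have one0: "sa k = 0 \<or> sb k = 0" for k
  proof (rule ccontr)
    assume "\<not> ?thesis"
    then have "0 < sa k" "0 < sb k" using nn[of k] by auto
    then obtain x y where x: "x \<in> supp n t" "fst x = k" and y: "y \<in> supp n t" "snd y = k"
      using pos_term[OF g, of "\<lambda>x. fst x = k"] pos_term[OF g, of "\<lambda>x. snd x = k"] by (auto simp: sa_def sb_def)
    have xa: "x \<in> arcs n" and ya: "y \<in> arcs n" using x y by (auto simp: supp_def)
    have "fst y \<noteq> snd y" using arcsD[of "fst y" "snd y" n] ya by simp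
    then have "x \<noteq> y" using x y by auto
    moreover have adm: "admissible n (supp n t)" using good_adm[OF g] x by blast
    ultimately have "(arc_verts n x \<inter> arc_verts n y \<noteq> {} \<and> (arc_verts n x \<subset> arc_verts n y \<or> arc_verts n y \<subset> arc_verts n x))
      \<or> (arc_verts n x \<inter> arc_verts n y = {} \<and> snd x \<noteq> fst y \<and> snd y \<noteq> fst x)"
      using adm_pair[OF adm x(1) y(1)] by blast
    then show False
    proof
      assume "arc_verts n x \<inter> arc_verts n y \<noteq> {} \<and> (arc_verts n x \<subset> arc_verts n y \<or> arc_verts n y \<subset> arc_verts n x)"
      then have "arc_verts n x \<subseteq> arc_verts n y \<or> arc_verts n y \<subseteq> arc_verts n x" by blast
      then show False using nested_no_chain(2)[OF xa ya] nested_no_chain(1)[OF ya xa] x y by auto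
    qed (use x y in auto)
  qed
  have "(\<Sum>k<n. \<bar>phi n v t $ v k\<bar>) = (\<Sum>k<n. sa k + sb k)"
  proof (rule sum.cong[OF refl])
    fix k assume "k \<in> {..<n}"
    then show "\<bar>phi n v t $ v k\<bar> = sa k + sb k" using ph[of k] one0[of k] nn[of k] by auto
  qed
  also have "\<dots> = 2 * (\<Sum>x\<in>arcs n. t x)" using sum_fst[of t n] sum_snd[of t n]
    by (simp add: sum.distrib sa_def sb_def)
  finally show ?thesis .
qed

lemma uncovered: assumes g: "good n t" and ne: "supp n t \<noteq> {}" shows "\<exists>k<n. cover n t k = 0"
proof -
  have adm: "admissible n (supp n t)" using good_adm[OF g ne] .
  obtain x where x: "x \<in> supp n t" and xmax: "\<And>y. y \<in> supp n t \<Longrightarrow> n - card (arc_verts n x) \<le> n - card (arc_verts n y)"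
    using exists_min[where S="supp n t" and f="\<lambda>x. n - card (arc_verts n x)"] finite_supp ne by blast
  have xa: "x \<in> arcs n" using x by (simp add: supp_def)
  have cardle: "\<And>y. y \<in> arcs n \<Longrightarrow> card (arc_verts n y) \<le> n"
    by (metis av_sub card_lessThan card_mono finite_lessThan prod.collapse)
  have finav: "\<And>y. y \<in> arcs n \<Longrightarrow> finite (arc_verts n y)"
    by (metis av_sub finite_lessThan finite_subset prod.collapse)
  have none: "\<not> (snd x \<in> arc_verts n y)" if y: "y \<in> supp n t" for y
  proof
    assume b: "snd x \<in> arc_verts n y"
    have ya: "y \<in> arcs n" using y by (simp add: supp_def)
    have bx: "snd x \<notin> arc_verts n x" using snk_notin[of "fst x" "snd x" n] xa by simp
    have "x \<noteq> y" using b bx by blast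
    from adm_pair[OF adm x y this] show False
    proof
      assume h: "arc_verts n x \<inter> arc_verts n y \<noteq> {} \<and> (arc_verts n x \<subset> arc_verts n y \<or> arc_verts n y \<subset> arc_verts n x)"
      show False
      proof (cases "arc_verts n x \<subset> arc_verts n y")
        case True
        then have "card (arc_verts n x) < card (arc_verts n y)" using psubset_card_mono finav[OF ya] by blast
        then show False using xmax[OF y] cardle[OF ya] by linarith
      next
        case False
        then show False using h b bx by blast
      qed
    next
      assume h: "arc_verts n x \<inter> arc_verts n y = {} \<and> snd x \<noteq> fst y \<and> snd y \<noteq> fst x"
      have "pr n (snd x) \<in> arc_verts n x" using pr_snk_in[of "fst x" "snd x" n] xa by simp
      then have "pr n (snd x) \<notin> arc_verts n y" using h by blast
      then have "snd x = fst y" using enter[of "fst y" "snd y" n "snd x"] ya b by simp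
      then show False using h by simp
    qed
  qed
  have E: "{y \<in> supp n t. snd x \<in> arc_verts n y} = {}" using none by blast
  have "cover n t (snd x) = 0" by (subst cover_supp[OF g]) (simp only: E sum.empty)
  moreover have "snd x < n" using arcsD[of "fst x" "snd x" n] xa by simp
  ultimately show ?thesis by blast
qed

lemma inj_phi: assumes g: "good n t" and g': "good n t'" and ne: "supp n t \<noteq> {}" "supp n t' \<noteq> {}"
  and inj: "inj_on v {..<n}" and eq: "phi n v t = phi n v t'" and n: "0 < n"
  shows "t = t'"
proof -
  define D where "D k = cover n t k - cover n t' k" for k
  have "D k = D (pr n k)" if "k < n" for k
    using phi_cover[OF inj that, of t] phi_cover[OF inj that, of t'] eq by (simp add: D_def)
  then have cst: "\<And>k. k < n \<Longrightarrow> D k = D 0" using const_cycle by blast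
  obtain k1 where k1: "k1 < n" "cover n t k1 = 0" using uncovered[OF g ne(1)] by blast
  obtain k2 where k2: "k2 < n" "cover n t' k2 = 0" using uncovered[OF g' ne(2)] by blast
  have cnn: "0 \<le> cover n s k" if "good n s" for s k unfolding cover_def by (rule sum_nonneg) (rule good_nn[OF that])
  have "D k1 \<le> 0" "D k2 \<ge> 0" using k1 k2 cnn[OF g] cnn[OF g'] by (auto simp: D_def)
  then have "D 0 = 0" using cst[OF k1(1)] cst[OF k2(1)] by linarith
  then have "cover n t k = cover n t' k" for k
    using cst[of k] cover_ge[of n k] by (cases "k < n") (auto simp: D_def)
  then show ?thesis using uniq[OF g g'] by blast
qed




lemma sum_fst_snd_zero: fixes t :: "nat\<times>nat \<Rightarrow> real"
  shows "(\<Sum>k<n. \<Sum>x\<in>arcs n. t x * ((if fst x = k then 1 else 0) - (if snd x = k then 1 else 0))) = 0"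
  using sum_fst[of t n] sum_snd[of t n]
  by (simp add: right_diff_distrib sum_subtractf)

lemma rv_inj: assumes inj: "inj_on v {..<n}" shows "inj_on (root_vert v) (arcs n)"
proof (rule inj_onI)
  fix x y assume x: "x \<in> arcs n" and y: "y \<in> arcs n" and e: "root_vert v x = root_vert v y"
  have xn: "fst x < n" "snd x < n" "fst x \<noteq> snd x" using arcsD[of "fst x" "snd x" n] x by auto
  have yn: "fst y < n" "snd y < n" "fst y \<noteq> snd y" using arcsD[of "fst y" "snd y" n] y by auto
  have "root_vert v x $ v (fst x) = root_vert v y $ v (fst x)" using e by simp
  then have 1: "fst y = fst x" using rv_nth[OF inj x xn(1)] rv_nth[OF inj y xn(1)] xn yn
    by (auto split: if_splits)
  have "root_vert v x $ v (snd x) = root_vert v y $ v (snd x)" using e by simp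
  then have 2: "snd y = snd x" using rv_nth[OF inj x xn(2)] rv_nth[OF inj y xn(2)] xn yn 1
    by (auto split: if_splits)
  show "x = y" using 1 2 by (simp add: prod_eq_iff)
qed

locale rootctx =
  fixes v :: "nat \<Rightarrow> 'n::finite" and n :: nat
  assumes cardn: "n = CARD('n)" and n3: "3 \<le> n" and bij: "bij_betw v {..<n} UNIV"
begin

lemma inj: "inj_on v {..<n}" using bij bij_betw_def by blast

lemma surjv: "\<exists>k<n. v k = i"
proof -
  have "i \<in> v ` {..<n}" using bij by (simp add: bij_betw_def)
  then show ?thesis by auto
qed

lemma sumU: "(\<Sum>i\<in>UNIV. f i) = (\<Sum>k<n. f (v k))"
  using sum.reindex_bij_betw[OF bij, of f] by simp

lemma vec_eqI: "(\<And>k. k < n \<Longrightarrow> x $ v k = y $ v k) \<Longrightarrow> x = y"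
  by (metis surjv vec_eq_iff)

lemma N1_alt: "N1 x = (\<Sum>k<n. \<bar>x $ v k\<bar>)" unfolding N1_def by (rule sumU)

lemma H0_alt: "x \<in> H0 \<longleftrightarrow> (\<Sum>k<n. x $ v k) = 0" unfolding H0_def using sumU[of "\<lambda>i. x $ i"] by simp

lemma phi_H0: "phi n v t \<in> H0"
proof -
  have "(\<Sum>k<n. phi n v t $ v k) = (\<Sum>k<n. \<Sum>x\<in>arcs n. t x * ((if fst x = k then 1 else 0) - (if snd x = k then 1 else 0)))"
    by (rule sum.cong[OF refl]) (simp add: phi_nth[OF inj])
  then show ?thesis unfolding H0_alt using sum_fst_snd_zero[of t n] by simp
qed

lemma geom_good: assumes adm: "admissible n \<sigma>" and t: "t \<in> geom_simplex \<sigma>"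
  shows "good n t" "supp n t \<noteq> {}" "supp n t \<subseteq> \<sigma>" "(\<Sum>x\<in>arcs n. t x) = 1"
proof -
  have tnn: "\<And>x. 0 \<le> t x" and tout: "\<And>x. x \<notin> \<sigma> \<Longrightarrow> t x = 0" and ts: "sum t \<sigma> = 1"
    using t unfolding geom_simplex_def by auto
  have sa: "\<sigma> \<subseteq> arcs n" and fs: "finite \<sigma>" using adm unfolding admissible_def by auto
  show sub: "supp n t \<subseteq> \<sigma>" using tout by (force simp: supp_def)
  show ne: "supp n t \<noteq> {}"
  proof
    assume e: "supp n t = {}"
    have "\<forall>x\<in>\<sigma>. t x = 0"
    proof
      fix x assume "x \<in> \<sigma>"
      moreover have "x \<notin> supp n t" using e by blast
      ultimately have "\<not> 0 < t x" using sa unfolding supp_def by blast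
      then show "t x = 0" using tnn[of x] by linarith
    qed
    then have "sum t \<sigma> = 0" by simp
    then show False using ts by simp
  qed
  show "good n t" unfolding good_def using tnn tout sa adm_sub[OF adm sub] by blast
  have "sum t \<sigma> = sum t (arcs n)"
    by (rule sum.mono_neutral_left[OF finite_arcs sa]) (use tout in auto)
  then show "(\<Sum>x\<in>arcs n. t x) = 1" using ts by simp
qed

lemma good_geom: assumes g: "good n t" and s: "(\<Sum>x\<in>arcs n. t x) = 1"
  shows "admissible n (supp n t)" "t \<in> geom_simplex (supp n t)"
proof -
  have "supp n t \<noteq> {}"
  proof
    assume e: "supp n t = {}"
    have "\<forall>x\<in>arcs n. t x = 0" using good_zero[OF g] e by blast
    then show False using s by simp
  qed
  then show "admissible n (supp n t)" using good_adm[OF g] by blast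
  have eq: "sum t (supp n t) = sum t (arcs n)"
  proof (rule sum.mono_neutral_left[OF finite_arcs])
    show "supp n t \<subseteq> arcs n" unfolding supp_def by blast
    show "\<forall>i\<in>arcs n - supp n t. t i = 0" using good_zero[OF g] by blast
  qed
  have "(\<forall>x. 0 \<le> t x) \<and> (\<forall>x. x \<notin> supp n t \<longrightarrow> t x = 0) \<and> sum t (supp n t) = 1"
    by (intro conjI allI impI) (simp_all add: good_nn[OF g] good_zero[OF g] eq s)
  then show "t \<in> geom_simplex (supp n t)" unfolding geom_simplex_def by blast
qed

lemma N1_phi: assumes adm: "admissible n \<sigma>" and t: "t \<in> geom_simplex \<sigma>"
  shows "N1 (phi n v t) = 2"
  unfolding N1_alt using N1_formula[OF geom_good(1)[OF adm t] inj] geom_good(4)[OF adm t] by simp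

lemma existence: assumes y: "y \<in> H0" and ny: "N1 y = 2"
  shows "\<exists>\<sigma> t. admissible n \<sigma> \<and> t \<in> geom_simplex \<sigma> \<and> phi n v t = y"
proof -
  have n0: "0 < n" using n3 by simp
  define S where "S k = (\<Sum>j\<in>{..k}. y $ v j)" for k
  define m where "m = Min (S ` {..<n})"
  define F where "F k = S k - m" for k
  have Fnn: "\<forall>k<n. 0 \<le> F k" unfolding F_def m_def by (auto intro: Min_le)
  obtain kz where "kz < n" "S kz = m" using Min_in[of "S ` {..<n}"] n0 unfolding m_def by fastforce
  then have Fz: "\<exists>k<n. F k = 0" by (auto simp: F_def)
  have Sn: "S (n - 1) = 0"
  proof -
    have "{..n-1} = {..<n}" using n0 by auto
    then show ?thesis using y H0_alt by (simp add: S_def)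
  qed
  have Fd: "F k - F (pr n k) = y $ v k" if k: "k < n" for k
  proof (cases k)
    case 0 then show ?thesis using Sn n0 by (simp add: F_def S_def pr_alt)
  next
    case (Suc j)
    then have "pr n k = j" using k by (simp add: pr_alt)
    then show ?thesis using Suc by (simp add: F_def S_def)
  qed
  obtain t where t: "\<forall>x. 0 \<le> t x" "\<forall>x. x \<notin> arcs n \<longrightarrow> t x = 0" "\<forall>x. 0 < t x \<longrightarrow> (\<exists>c. lcomp n F x c)"
      "\<forall>k<n. cover n t k = F k"
    using peel_aux[OF refl n0 Fnn Fz] by blast
  have g: "good n t"
  proof -
    have "supp n t \<noteq> {} \<longrightarrow> admissible n (supp n t)"
    proof
      assume ne: "supp n t \<noteq> {}"
      show "admissible n (supp n t)"
      proof (rule comps_adm[OF finite_supp ne])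
        fix x assume "x \<in> supp n t"
        then have "0 < t x" by (simp add: supp_def)
        then show "\<exists>c. lcomp n F x c" using t(3) by blast
      qed
    qed
    then show ?thesis unfolding good_def using t(1,2) by blast
  qed
  have ph: "phi n v t = y"
  proof (rule vec_eqI)
    fix k assume k: "k < n"
    show "phi n v t $ v k = y $ v k"
      using phi_cover[OF inj k, of t] t(4) k pr_lt[OF k] Fd[OF k] by simp
  qed
  have "2 = 2 * (\<Sum>x\<in>arcs n. t x)" using N1_formula[OF g inj] ph ny N1_alt by simp
  then have s1: "(\<Sum>x\<in>arcs n. t x) = 1" by simp
  show ?thesis using good_geom[OF g s1] ph by blast
qed

lemma phi_simplex: assumes adm: "admissible n \<sigma>"
  shows "phi n v ` geom_simplex \<sigma> = convex hull (root_vert v ` \<sigma>)"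
proof -
  have sa: "\<sigma> \<subseteq> arcs n" and fs: "finite \<sigma>" using adm unfolding admissible_def by auto
  have injs: "inj_on (root_vert v) \<sigma>" using rv_inj[OF inj] sa inj_on_subset by blast
  have phis: "phi n v t = (\<Sum>x\<in>\<sigma>. t x *\<^sub>R root_vert v x)" if "\<And>x. x \<notin> \<sigma> \<Longrightarrow> t x = 0" for t
    unfolding phi_def by (rule sum.mono_neutral_right[OF finite_arcs sa]) (use that in auto)
  have ch: "convex hull (root_vert v ` \<sigma>) = {y. \<exists>u. (\<forall>x\<in>root_vert v ` \<sigma>. 0 \<le> u x) \<and> sum u (root_vert v ` \<sigma>) = 1
      \<and> (\<Sum>x\<in>root_vert v ` \<sigma>. u x *\<^sub>R x) = y}"
    using convex_hull_finite[of "root_vert v ` \<sigma>"] fs by simp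
  show ?thesis
  proof
    show "phi n v ` geom_simplex \<sigma> \<subseteq> convex hull (root_vert v ` \<sigma>)"
    proof
      fix p assume "p \<in> phi n v ` geom_simplex \<sigma>"
      then obtain t where t: "t \<in> geom_simplex \<sigma>" "p = phi n v t" by blast
      have tnn: "\<And>x. 0 \<le> t x" and tout: "\<And>x. x \<notin> \<sigma> \<Longrightarrow> t x = 0" and ts: "sum t \<sigma> = 1"
        using t unfolding geom_simplex_def by auto
      define u where "u q = t (inv_into \<sigma> (root_vert v) q)" for q
      have uu: "u (root_vert v x) = t x" if "x \<in> \<sigma>" for x using inv_into_f_f[OF injs that] by (simp add: u_def)
      have "sum u (root_vert v ` \<sigma>) = sum t \<sigma>" using sum.reindex[OF injs, of u] uu by simp
      moreover have "(\<Sum>q\<in>root_vert v ` \<sigma>. u q *\<^sub>R q) = (\<Sum>x\<in>\<sigma>. t x *\<^sub>R root_vert v x)"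
        using sum.reindex[OF injs, of "\<lambda>q. u q *\<^sub>R q"] uu by simp
      moreover have "\<forall>q\<in>root_vert v ` \<sigma>. 0 \<le> u q" using uu tnn by auto
      ultimately have "\<exists>u. (\<forall>q\<in>root_vert v ` \<sigma>. 0 \<le> u q) \<and> sum u (root_vert v ` \<sigma>) = 1
        \<and> (\<Sum>q\<in>root_vert v ` \<sigma>. u q *\<^sub>R q) = p" using t(2) phis[OF tout] ts by (intro exI[of _ u]) simp
      then show "p \<in> convex hull (root_vert v ` \<sigma>)" unfolding ch by (rule CollectI)
    qed
  next
    show "convex hull (root_vert v ` \<sigma>) \<subseteq> phi n v ` geom_simplex \<sigma>"
    proof
      fix p assume "p \<in> convex hull (root_vert v ` \<sigma>)"
      then have "\<exists>u. (\<forall>q\<in>root_vert v ` \<sigma>. 0 \<le> u q) \<and> sum u (root_vert v ` \<sigma>) = 1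
        \<and> (\<Sum>q\<in>root_vert v ` \<sigma>. u q *\<^sub>R q) = p" unfolding ch by (rule CollectD)
      then obtain u where u: "\<forall>q\<in>root_vert v ` \<sigma>. 0 \<le> u q" "sum u (root_vert v ` \<sigma>) = 1"
        "(\<Sum>q\<in>root_vert v ` \<sigma>. u q *\<^sub>R q) = p" by (elim exE conjE)
      define t where "t x = (if x \<in> \<sigma> then u (root_vert v x) else 0)" for x
      have "sum t \<sigma> = (\<Sum>x\<in>\<sigma>. u (root_vert v x))" by (rule sum.cong) (simp_all add: t_def)
      also have "\<dots> = sum u (root_vert v ` \<sigma>)" using sum.reindex[OF injs, of u] by (simp add: o_def)
      finally have ts: "sum t \<sigma> = 1" using u(2) by simp
      have "\<forall>x. 0 \<le> t x" using u(1) by (simp add: t_def)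
      moreover have "\<forall>x. x \<notin> \<sigma> \<longrightarrow> t x = 0" by (simp add: t_def)
      ultimately have tg: "t \<in> geom_simplex \<sigma>" unfolding geom_simplex_def using ts by blast
      have "phi n v t = (\<Sum>x\<in>\<sigma>. t x *\<^sub>R root_vert v x)" by (rule phis) (simp add: t_def)
      also have "\<dots> = (\<Sum>x\<in>\<sigma>. u (root_vert v x) *\<^sub>R root_vert v x)" by (rule sum.cong) (simp_all add: t_def)
      also have "\<dots> = p" using u(3) sum.reindex[OF injs, of "\<lambda>q. u q *\<^sub>R q"] by (simp add: o_def)
      finally show "p \<in> phi n v ` geom_simplex \<sigma>" using tg by blast
    qed
  qed
qed

end




context rootctx begin

definition G where "G = {ee v i - ee v j | i j. i < n \<and> j < n \<and> i \<noteq> j}"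

lemma G_eq: "G = root_vert v ` arcs n"
  unfolding G_def root_vert_def arcs_def by force

lemma finite_G: "finite G" using G_eq finite_arcs by simp

lemma Root_G: "Root n v = convex hull G" unfolding Root_def G_def by simp

lemma phi_on: assumes "finite \<sigma>" "\<sigma> \<subseteq> arcs n" "\<And>x. x \<notin> \<sigma> \<Longrightarrow> t x = 0"
  shows "phi n v t = (\<Sum>x\<in>\<sigma>. t x *\<^sub>R root_vert v x)"
  unfolding phi_def by (rule sum.mono_neutral_right[OF finite_arcs assms(2)]) (use assms(3) in auto)

lemma vertex_geom: "vertex_pt x \<in> geom_simplex {x}"
  unfolding geom_simplex_def vertex_pt_def by auto

lemma adm_single: "x \<in> arcs n \<Longrightarrow> admissible n {x}"
  unfolding admissible_def by auto

lemma phi_vertex: "x \<in> arcs n \<Longrightarrow> phi n v (vertex_pt x) = root_vert v x"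
  using phi_on[of "{x}" "vertex_pt x"] by (simp add: vertex_pt_def)

lemma G_H0: "g \<in> G \<Longrightarrow> g \<in> H0 \<and> N1 g = 2"
proof -
  assume "g \<in> G"
  then obtain x where x: "x \<in> arcs n" "g = root_vert v x" unfolding G_eq by blast
  then have "g = phi n v (vertex_pt x)" using phi_vertex by simp
  then show ?thesis using phi_H0 N1_phi[OF adm_single[OF x(1)] vertex_geom] by simp
qed

lemma affine_indep: assumes adm: "admissible n \<sigma>" shows "\<not> affine_dependent (root_vert v ` \<sigma>)"
proof
  assume dep: "affine_dependent (root_vert v ` \<sigma>)"
  have sa: "\<sigma> \<subseteq> arcs n" and fs: "finite \<sigma>" using adm unfolding admissible_def by auto
  have injs: "inj_on (root_vert v) \<sigma>" using rv_inj[OF inj] sa inj_on_subset by blast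
  obtain U where U: "sum U (root_vert v ` \<sigma>) = 0" "\<exists>w\<in>root_vert v ` \<sigma>. U w \<noteq> 0"
    "(\<Sum>w\<in>root_vert v ` \<sigma>. U w *\<^sub>R w) = 0"
    using dep affine_dependent_explicit_finite[of "root_vert v ` \<sigma>"] fs by blast
  define \<mu> where "\<mu> x = U (root_vert v x)" for x
  have s0: "sum \<mu> \<sigma> = 0" using U(1) sum.reindex[OF injs, of U] by (simp add: \<mu>_def o_def)
  have v0: "(\<Sum>x\<in>\<sigma>. \<mu> x *\<^sub>R root_vert v x) = 0"
    using U(3) sum.reindex[OF injs, of "\<lambda>w. U w *\<^sub>R w"] by (simp add: \<mu>_def o_def)
  obtain x0 where x0: "x0 \<in> \<sigma>" "\<mu> x0 \<noteq> 0" using U(2) by (auto simp: \<mu>_def)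
  define pp where "pp x = max (\<mu> x) 0" for x
  define nn where "nn x = max (- \<mu> x) 0" for x
  have pn: "\<mu> x = pp x - nn x" for x by (simp add: pp_def nn_def max_def)
  have ppn: "0 \<le> pp x" "0 \<le> nn x" for x by (simp_all add: pp_def nn_def)
  have eqs: "sum pp \<sigma> = sum nn \<sigma>" using s0 pn by (simp add: sum_subtractf)
  have "\<exists>x\<in>\<sigma>. 0 < \<mu> x"
  proof (rule ccontr)
    assume "\<not> ?thesis"
    then have le: "\<forall>x\<in>\<sigma>. \<mu> x \<le> 0" by auto
    then have "\<forall>x\<in>\<sigma>. - \<mu> x = 0" using sum_nonneg_eq_0_iff[OF fs, of "\<lambda>x. - \<mu> x"] s0
      by (simp add: sum_negf)
    then show False using x0 by auto
  qed
  then obtain x1 where x1: "x1 \<in> \<sigma>" "0 < \<mu> x1" by blast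
  define P where "P = sum pp \<sigma>"
  have Ppos: "0 < P"
  proof -
    have "pp x1 \<le> P" unfolding P_def by (rule member_le_sum[OF x1(1)]) (simp_all add: ppn fs)
    moreover have "0 < pp x1" using x1 by (simp add: pp_def)
    ultimately show ?thesis by linarith
  qed
  define t1 where "t1 x = (if x \<in> \<sigma> then pp x / P else 0)" for x
  define t2 where "t2 x = (if x \<in> \<sigma> then nn x / P else 0)" for x
  have g1: "t1 \<in> geom_simplex \<sigma>"
  proof -
    have "sum t1 \<sigma> = sum (\<lambda>x. pp x / P) \<sigma>" by (rule sum.cong) (simp_all add: t1_def)
    also have "\<dots> = 1" using Ppos by (simp add: sum_divide_distrib[symmetric] P_def)
    finally show ?thesis unfolding geom_simplex_def using ppn Ppos by (auto simp: t1_def)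
  qed
  have g2: "t2 \<in> geom_simplex \<sigma>"
  proof -
    have "sum t2 \<sigma> = sum (\<lambda>x. nn x / P) \<sigma>" by (rule sum.cong) (simp_all add: t2_def)
    also have "\<dots> = 1" using Ppos eqs by (simp add: sum_divide_distrib[symmetric] P_def)
    finally show ?thesis unfolding geom_simplex_def using ppn Ppos by (auto simp: t2_def)
  qed
  have "phi n v t1 - phi n v t2 = (\<Sum>x\<in>\<sigma>. (t1 x - t2 x) *\<^sub>R root_vert v x)"
    using phi_on[OF fs sa, of t1] phi_on[OF fs sa, of t2]
    by (simp add: t1_def t2_def scaleR_diff_left sum_subtractf)
  also have "\<dots> = (\<Sum>x\<in>\<sigma>. (1/P) *\<^sub>R (\<mu> x *\<^sub>R root_vert v x))"
    by (rule sum.cong) (simp_all add: t1_def t2_def pn diff_divide_distrib)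
  also have "\<dots> = 0" by (simp only: scaleR_sum_right[symmetric] v0 scaleR_zero_right)
  finally have "phi n v t1 = phi n v t2" by simp
  then have "t1 = t2" using inj_phi[OF geom_good(1)[OF adm g1] geom_good(1)[OF adm g2]
      geom_good(2)[OF adm g1] geom_good(2)[OF adm g2] inj] n3 by simp
  then have "t1 x1 = t2 x1" by simp
  moreover have "0 < t1 x1" using x1 Ppos by (simp add: t1_def pp_def)
  moreover have "t2 x1 = 0" using x1 by (simp add: t2_def nn_def)
  ultimately show False by simp
qed

lemma N1_scale: "N1 (c *\<^sub>R x) = \<bar>c\<bar> * N1 x"
  unfolding N1_def by (simp add: abs_mult sum_distrib_left)

lemma H0_scale: "x \<in> H0 \<Longrightarrow> c *\<^sub>R x \<in> H0"
  unfolding H0_def by (simp add: sum_distrib_left[symmetric])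

lemma N1_nonneg: "0 \<le> N1 x" unfolding N1_def by (simp add: sum_nonneg)

lemma K_convex: "convex {x :: real^'n. x \<in> H0 \<and> N1 x \<le> 2}"
proof (rule convexI)
  fix x y :: "real^'n" and a b :: real
  assume x: "x \<in> {x. x \<in> H0 \<and> N1 x \<le> 2}" and y: "y \<in> {x. x \<in> H0 \<and> N1 x \<le> 2}"
    and ab: "0 \<le> a" "0 \<le> b" "a + b = 1"
  have "(\<Sum>i\<in>UNIV. (a *\<^sub>R x + b *\<^sub>R y) $ i) = a * (\<Sum>i\<in>UNIV. x $ i) + b * (\<Sum>i\<in>UNIV. y $ i)"
    by (simp add: sum.distrib sum_distrib_left)
  then have h: "a *\<^sub>R x + b *\<^sub>R y \<in> H0" using x y by (simp add: H0_def)
  have "N1 (a *\<^sub>R x + b *\<^sub>R y) \<le> (\<Sum>i\<in>UNIV. a * \<bar>x $ i\<bar> + b * \<bar>y $ i\<bar>)"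
    unfolding N1_def
  proof (rule sum_mono)
    fix i
    have "\<bar>a * x $ i + b * y $ i\<bar> \<le> \<bar>a * x $ i\<bar> + \<bar>b * y $ i\<bar>" by (rule abs_triangle_ineq)
    then show "\<bar>(a *\<^sub>R x + b *\<^sub>R y) $ i\<bar> \<le> a * \<bar>x $ i\<bar> + b * \<bar>y $ i\<bar>" using ab by (simp add: abs_mult)
  qed
  also have "\<dots> = a * N1 x + b * N1 y" by (simp add: N1_def sum.distrib sum_distrib_left)
  also have "\<dots> \<le> a * 2 + b * 2" using x y ab by (intro add_mono mult_left_mono) auto
  finally show "a *\<^sub>R x + b *\<^sub>R y \<in> {x. x \<in> H0 \<and> N1 x \<le> 2}" using h ab by simp
qed

lemma Root_convex: "convex (Root n v)" unfolding Root_G by simp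

lemma G_Root: "g \<in> G \<Longrightarrow> g \<in> Root n v"
  unfolding Root_G using hull_subset[of G convex] by blast

lemma zero_Root: "0 \<in> Root n v"
proof -
  have a01: "(0,1) \<in> arcs n" "(1,0) \<in> arcs n" using n3 by (auto simp: arcs_def)
  have r: "root_vert v (0,1) \<in> Root n v" "root_vert v (1,0) \<in> Root n v"
    using G_Root a01 G_eq by blast+
  have "(1/2) *\<^sub>R root_vert v (0,1) + (1/2) *\<^sub>R root_vert v (1,0) \<in> Root n v"
    by (rule convexD[OF Root_convex r]) simp_all
  moreover have "root_vert v (1,0) = - root_vert v (0,1)" by (simp add: root_vert_def)
  ultimately show ?thesis by (simp add: scaleR_right_diff_distrib)
qed

lemma Root_char: "Root n v = {x :: real^'n. x \<in> H0 \<and> N1 x \<le> 2}"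
proof
  show "Root n v \<subseteq> {x :: real^'n. x \<in> H0 \<and> N1 x \<le> 2}"
    unfolding Root_G
  proof (rule hull_minimal)
    show "G \<subseteq> {x :: real^'n. x \<in> H0 \<and> N1 x \<le> 2}" using G_H0 by auto
    show "convex {x :: real^'n. x \<in> H0 \<and> N1 x \<le> 2}" by (rule K_convex)
  qed
next
  show "{x :: real^'n. x \<in> H0 \<and> N1 x \<le> 2} \<subseteq> Root n v"
  proof
    fix x :: "real^'n" assume x: "x \<in> {x :: real^'n. x \<in> H0 \<and> N1 x \<le> 2}"
    then have xH: "x \<in> H0" and xN: "N1 x \<le> 2" by auto
    show "x \<in> Root n v"
    proof (cases "N1 x = 0")
      case True
      have "\<forall>i\<in>UNIV. \<bar>x $ i\<bar> = 0" using True sum_nonneg_eq_0_iff[of UNIV "\<lambda>i. \<bar>x $ i\<bar>"] by (simp add: N1_def)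
      then have "x = 0" by (simp add: vec_eq_iff)
      then show ?thesis using zero_Root by simp
    next
      case False
      then have Npos: "0 < N1 x" using N1_nonneg[of x] by simp
      define y where "y = (2 / N1 x) *\<^sub>R x"
      have yH: "y \<in> H0" using xH H0_scale by (simp add: y_def)
      have Ny: "N1 y = 2" using Npos by (simp add: y_def N1_scale)
      obtain \<sigma> t where st: "admissible n \<sigma>" "t \<in> geom_simplex \<sigma>" "phi n v t = y"
        using existence[OF yH Ny] by blast
      have yc: "y \<in> convex hull (root_vert v ` \<sigma>)" using phi_simplex[OF st(1)] st by blast
      have "\<sigma> \<subseteq> arcs n" using st(1) by (simp add: admissible_def)
      then have "root_vert v ` \<sigma> \<subseteq> G" using G_eq by blast
      then have "convex hull (root_vert v ` \<sigma>) \<subseteq> Root n v" unfolding Root_G by (rule hull_mono)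
      then have yR: "y \<in> Root n v" using yc by blast
      have "(N1 x / 2) *\<^sub>R y + (1 - N1 x / 2) *\<^sub>R 0 \<in> Root n v"
        by (rule convexD[OF Root_convex yR zero_Root]) (use Npos xN in simp_all)
      moreover have "(N1 x / 2) *\<^sub>R y = x" using Npos by (simp add: y_def)
      ultimately show ?thesis by simp
    qed
  qed
qed

end




context rootctx begin

lemma N1_cont: "continuous_on UNIV (N1 :: real^'n \<Rightarrow> real)"
  unfolding N1_def[abs_def] by (intro continuous_intros)

lemma Root_sub_H0: "Root n v \<subseteq> H0" using Root_char by auto

lemma Root_closed: "closed (Root n v)"
  unfolding Root_G by (rule compact_imp_closed[OF compact_convex_hull[OF finite_imp_compact[OF finite_G]]])

lemma Root_interior: "(top_of_set H0) interior_of (Root n v) = {x :: real^'n. x \<in> H0 \<and> N1 x < 2}"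
proof
  show "{x :: real^'n. x \<in> H0 \<and> N1 x < 2} \<subseteq> (top_of_set H0) interior_of (Root n v)"
  proof (rule interior_of_maximal)
    show "{x :: real^'n. x \<in> H0 \<and> N1 x < 2} \<subseteq> Root n v"
    proof
      fix x :: "real^'n" assume "x \<in> {x :: real^'n. x \<in> H0 \<and> N1 x < 2}"
      then show "x \<in> Root n v" unfolding Root_char by simp
    qed
    have o: "open {x :: real^'n. N1 x < 2}" by (rule open_Collect_less[OF N1_cont continuous_on_const])
    have e: "{x :: real^'n. x \<in> H0 \<and> N1 x < 2} = H0 \<inter> {x. N1 x < 2}" by blast
    show "openin (top_of_set H0) {x :: real^'n. x \<in> H0 \<and> N1 x < 2}"
      unfolding openin_open by (rule exI[where x="{x. N1 x < 2}"]) (simp only: o e simp_thms)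
  qed
next
  show "(top_of_set H0) interior_of (Root n v) \<subseteq> {x :: real^'n. x \<in> H0 \<and> N1 x < 2}"
  proof
    fix x assume "x \<in> (top_of_set H0) interior_of (Root n v)"
    then obtain T where T: "openin (top_of_set H0) T" "x \<in> T" "T \<subseteq> Root n v"
      unfolding interior_of_def by blast
    obtain U where U: "open U" "T = H0 \<inter> U" using T(1) unfolding openin_open by blast
    have xR: "x \<in> H0" "N1 x \<le> 2" using T Root_char by auto
    have "N1 x \<noteq> 2"
    proof
      assume x2: "N1 x = 2"
      obtain e where e: "0 < e" "ball x e \<subseteq> U" using U T(2) open_contains_ball by blast
      define d where "d = e / (2 * (norm x + 1))"
      have "0 < norm x + 1" by (simp add: add_nonneg_pos)
      then have d: "0 < d" unfolding d_def using e by (intro divide_pos_pos mult_pos_pos) simp_all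
      define y where "y = (1 + d) *\<^sub>R x"
      have "dist x y = d * norm x" using d by (simp add: y_def dist_norm algebra_simps)
      also have "\<dots> < e"
      proof -
        have "d * norm x \<le> d * (norm x + 1)" using d by simp
        also have "\<dots> = e / 2" using \<open>0 < norm x + 1\<close> by (simp add: d_def field_simps)
        finally show ?thesis using e by simp
      qed
      finally have "y \<in> U" using e by auto
      moreover have "y \<in> H0" using xR H0_scale by (simp add: y_def)
      ultimately have "y \<in> Root n v" using T U by blast
      then have "N1 y \<le> 2" using Root_char by auto
      moreover have "N1 y = (1 + d) * 2" using x2 d by (simp add: y_def N1_scale)
      ultimately show False using d by simp
    qed
    then show "x \<in> {x :: real^'n. x \<in> H0 \<and> N1 x < 2}" using xR by simp
  qed
qed

lemma Root_bd: "Root_boundary n v = {x :: real^'n. x \<in> H0 \<and> N1 x = 2}"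
proof -
  have "closedin (top_of_set H0) (Root n v)"
    unfolding closedin_closed using Root_closed Root_sub_H0 by blast
  then have "(top_of_set H0) closure_of (Root n v) = Root n v" by (rule closure_of_closedin)
  then show ?thesis unfolding Root_boundary_def frontier_of_def Root_interior using Root_char by auto
qed

lemma union_bd: "\<Union>((\<lambda>\<sigma>. phi n v ` geom_simplex \<sigma>) ` {\<sigma>. admissible n \<sigma>}) = Root_boundary n v"
proof
  show "\<Union>((\<lambda>\<sigma>. phi n v ` geom_simplex \<sigma>) ` {\<sigma>. admissible n \<sigma>}) \<subseteq> Root_boundary n v"
    unfolding Root_bd using phi_H0 N1_phi by auto
  show "Root_boundary n v \<subseteq> \<Union>((\<lambda>\<sigma>. phi n v ` geom_simplex \<sigma>) ` {\<sigma>. admissible n \<sigma>})"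
  proof
    fix y assume "y \<in> Root_boundary n v"
    then have "y \<in> H0" "N1 y = 2" unfolding Root_bd by auto
    then obtain \<sigma> t where "admissible n \<sigma>" "t \<in> geom_simplex \<sigma>" "phi n v t = y"
      using existence by blast
    then show "y \<in> \<Union>((\<lambda>\<sigma>. phi n v ` geom_simplex \<sigma>) ` {\<sigma>. admissible n \<sigma>})" by blast
  qed
qed

end




lemma cm_scale: "continuous_map X euclideanreal f \<Longrightarrow> continuous_map X euclidean (\<lambda>x. f x *\<^sub>R (c::'a::real_normed_vector))"
  by (simp add: continuous_map_atin tendsto_scaleR)

context rootctx begin

lemma half_convex: "convex {y :: real^'n. y $ a - y $ b \<le> 1}"
proof (rule convexI)
  fix x y :: "real^'n" and u w :: real
  assume x: "x \<in> {y. y $ a - y $ b \<le> 1}" and y: "y \<in> {y. y $ a - y $ b \<le> 1}"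
    and uw: "0 \<le> u" "0 \<le> w" "u + w = 1"
  have "(u *\<^sub>R x + w *\<^sub>R y) $ a - (u *\<^sub>R x + w *\<^sub>R y) $ b = u * (x $ a - x $ b) + w * (y $ a - y $ b)"
    by (simp add: algebra_simps)
  also have "\<dots> \<le> u * 1 + w * 1" using x y uw by (intro add_mono mult_left_mono) auto
  finally show "u *\<^sub>R x + w *\<^sub>R y \<in> {y. y $ a - y $ b \<le> 1}" using uw by simp
qed

lemma ext_eq: "{p. p extreme_point_of Root n v} = G"
proof
  show "{p. p extreme_point_of Root n v} \<subseteq> G" unfolding Root_G using extreme_point_of_convex_hull by blast
  show "G \<subseteq> {p. p extreme_point_of Root n v}"
  proof
    fix g assume g: "g \<in> G"
    then obtain x where x: "x \<in> arcs n" "g = root_vert v x" unfolding G_eq by blast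
    obtain i j where xij: "x = (i,j)" by fastforce
    have ij: "i < n" "j < n" "i \<noteq> j" using arcsD x xij by auto
    have sub: "G - {g} \<subseteq> {y :: real^'n. y $ v i - y $ v j \<le> 1}"
    proof
      fix h assume h: "h \<in> G - {g}"
      then obtain y where y: "y \<in> arcs n" "h = root_vert v y" unfolding G_eq by blast
      obtain k l where ykl: "y = (k,l)" by fastforce
      have kl: "k < n" "l < n" "k \<noteq> l" using arcsD y ykl by auto
      have "\<not> (k = i \<and> l = j)" using h x y xij ykl by auto
      then have "h $ v i - h $ v j \<le> 1"
        using rv_nth[OF inj y(1) ij(1)] rv_nth[OF inj y(1) ij(2)] y(2) ykl kl ij by auto
      then show "h \<in> {y :: real^'n. y $ v i - y $ v j \<le> 1}" by simp
    qed
    have "convex hull (G - {g}) \<subseteq> {y :: real^'n. y $ v i - y $ v j \<le> 1}"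
      by (rule hull_minimal[where S=convex, OF sub half_convex[of "v i" "v j"]])
    moreover have "g $ v i - g $ v j = 2"
      using rv_nth[OF inj x(1) ij(1)] rv_nth[OF inj x(1) ij(2)] x(2) xij ij by auto
    ultimately have "g \<notin> convex hull (G - {g})" by auto
    then have "g extreme_point_of convex hull (insert g (G - {g}))"
      by (rule extreme_point_of_convex_hull_insert[rotated]) (simp add: finite_G)
    moreover have "insert g (G - {g}) = G" using g by blast
    ultimately show "g \<in> {p. p extreme_point_of Root n v}" unfolding Root_G by simp
  qed
qed

lemma bij_vert: "bij_betw (\<lambda>x. phi n v (vertex_pt x)) (arcs n) {p. p extreme_point_of Root n v}"
proof -
  have "bij_betw (root_vert v) (arcs n) G" unfolding G_eq using rv_inj[OF inj] by (simp add: bij_betw_def)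
  then show ?thesis unfolding ext_eq by (rule bij_betw_cong[THEN iffD1, rotated]) (simp add: phi_vertex)
qed

lemma inter_simplex: assumes a1: "admissible n \<sigma>" and a2: "admissible n \<sigma>'"
  shows "phi n v ` geom_simplex \<sigma> \<inter> phi n v ` geom_simplex \<sigma>' = convex hull (root_vert v ` (\<sigma> \<inter> \<sigma>'))"
proof
  show "phi n v ` geom_simplex \<sigma> \<inter> phi n v ` geom_simplex \<sigma>' \<subseteq> convex hull (root_vert v ` (\<sigma> \<inter> \<sigma>'))"
  proof
    fix p assume "p \<in> phi n v ` geom_simplex \<sigma> \<inter> phi n v ` geom_simplex \<sigma>'"
    then obtain t t' where t: "t \<in> geom_simplex \<sigma>" "p = phi n v t" and t': "t' \<in> geom_simplex \<sigma>'" "p = phi n v t'"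
      by blast
    have tt: "t = t'" using inj_phi[OF geom_good(1)[OF a1 t(1)] geom_good(1)[OF a2 t'(1)]
      geom_good(2)[OF a1 t(1)] geom_good(2)[OF a2 t'(1)] inj] t t' n3 by simp
    have o1: "\<forall>x. x \<notin> \<sigma> \<longrightarrow> t x = 0" and nn: "\<forall>x. 0 \<le> t x" and s: "sum t \<sigma> = 1"
      using t(1) unfolding geom_simplex_def by blast+
    have o2: "\<forall>x. x \<notin> \<sigma>' \<longrightarrow> t x = 0" using t'(1) tt unfolding geom_simplex_def by blast
    have out: "\<forall>x. x \<notin> \<sigma> \<inter> \<sigma>' \<longrightarrow> t x = 0" using o1 o2 by blast
    have fs: "finite \<sigma>" using a1 by (simp add: admissible_def)
    have "sum t (\<sigma> \<inter> \<sigma>') = sum t \<sigma>"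
    proof (rule sum.mono_neutral_left[OF fs])
      show "\<sigma> \<inter> \<sigma>' \<subseteq> \<sigma>" by blast
      show "\<forall>i\<in>\<sigma> - \<sigma> \<inter> \<sigma>'. t i = 0" using out by blast
    qed
    then have s1: "sum t (\<sigma> \<inter> \<sigma>') = 1" using s by simp
    have ne: "\<sigma> \<inter> \<sigma>' \<noteq> {}"
    proof
      assume "\<sigma> \<inter> \<sigma>' = {}"
      then show False using s1 by simp
    qed
    have a3: "admissible n (\<sigma> \<inter> \<sigma>')" using adm_sub[OF a1 _ ne] by blast
    have "t \<in> geom_simplex (\<sigma> \<inter> \<sigma>')" unfolding geom_simplex_def using nn out s1 by blast
    then show "p \<in> convex hull (root_vert v ` (\<sigma> \<inter> \<sigma>'))" using phi_simplex[OF a3] t(2) by blast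
  qed
  have h1: "convex hull (root_vert v ` (\<sigma> \<inter> \<sigma>')) \<subseteq> convex hull (root_vert v ` \<sigma>)" by (rule hull_mono) blast
  have h2: "convex hull (root_vert v ` (\<sigma> \<inter> \<sigma>')) \<subseteq> convex hull (root_vert v ` \<sigma>')" by (rule hull_mono) blast
  show "convex hull (root_vert v ` (\<sigma> \<inter> \<sigma>')) \<subseteq> phi n v ` geom_simplex \<sigma> \<inter> phi n v ` geom_simplex \<sigma>'"
    unfolding phi_simplex[OF a1] phi_simplex[OF a2] using h1 h2 by blast
qed

lemma fin_adm: "finite {\<sigma>. admissible n \<sigma>}"
proof (rule finite_subset[of _ "Pow (arcs n)"])
  show "{\<sigma>. admissible n \<sigma>} \<subseteq> Pow (arcs n)" unfolding admissible_def by blast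
  show "finite (Pow (arcs n))" using finite_arcs by simp
qed

lemma triang: "triangulation ((\<lambda>\<sigma>. phi n v ` geom_simplex \<sigma>) ` {\<sigma>. admissible n \<sigma>})"
proof -
  have simp1: "\<exists>k. k simplex (phi n v ` geom_simplex \<sigma>)" if a: "admissible n \<sigma>" for \<sigma>
  proof -
    have "(int (card (root_vert v ` \<sigma>)) - 1) simplex (convex hull (root_vert v ` \<sigma>))"
      unfolding simplex_def by (rule exI[of _ "root_vert v ` \<sigma>"]) (simp add: affine_indep[OF a])
    then show ?thesis unfolding phi_simplex[OF a] by blast
  qed
  have face: "(phi n v ` geom_simplex \<sigma> \<inter> phi n v ` geom_simplex \<sigma>') face_of (phi n v ` geom_simplex \<sigma>)"
    if a1: "admissible n \<sigma>" and a2: "admissible n \<sigma>'" for \<sigma> \<sigma>'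
  proof -
    have "\<exists>c. c \<subseteq> root_vert v ` \<sigma> \<and> convex hull (root_vert v ` (\<sigma> \<inter> \<sigma>')) = convex hull c"
      by (rule exI[of _ "root_vert v ` (\<sigma> \<inter> \<sigma>')"]) blast
    then have "convex hull (root_vert v ` (\<sigma> \<inter> \<sigma>')) face_of convex hull (root_vert v ` \<sigma>)"
      unfolding face_of_convex_hull_affine_independent[OF affine_indep[OF a1]] .
    then show ?thesis by (subst inter_simplex[OF a1 a2], subst phi_simplex[OF a1])
  qed
  show ?thesis unfolding triangulation_def
  proof (intro conjI ballI allI impI)
    show "finite ((\<lambda>\<sigma>. phi n v ` geom_simplex \<sigma>) ` {\<sigma>. admissible n \<sigma>})" using fin_adm by simp
  next
    fix T assume "T \<in> (\<lambda>\<sigma>. phi n v ` geom_simplex \<sigma>) ` {\<sigma>. admissible n \<sigma>}"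
    then obtain \<sigma> where "admissible n \<sigma>" "T = phi n v ` geom_simplex \<sigma>" by blast
    then show "\<exists>k. k simplex T" using simp1 by blast
  next
    fix T T' assume "T \<in> (\<lambda>\<sigma>. phi n v ` geom_simplex \<sigma>) ` {\<sigma>. admissible n \<sigma>} \<and> T' \<in> (\<lambda>\<sigma>. phi n v ` geom_simplex \<sigma>) ` {\<sigma>. admissible n \<sigma>}"
    then obtain \<sigma> \<sigma>' where "admissible n \<sigma>" "T = phi n v ` geom_simplex \<sigma>" "admissible n \<sigma>'" "T' = phi n v ` geom_simplex \<sigma>'"
      by blast
    then show "(T \<inter> T') face_of T" using face by blast
  qed
qed

end




context rootctx begin

lemma H0_subspace: "subspace (H0 :: (real^'n) set)"
  unfolding subspace_def H0_def by (simp add: sum.distrib sum_distrib_left[symmetric])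

lemma aff_H0: "affine hull (Root n v) \<subseteq> H0"
  by (rule hull_minimal[where S=affine, OF Root_sub_H0 subspace_imp_affine[OF H0_subspace]])

lemma face_bd: assumes F: "F face_of Root n v" "F \<noteq> Root n v" and p: "p \<in> F"
  shows "p \<in> H0" "N1 p = 2"
proof -
  have pR: "p \<in> Root n v" using face_of_imp_subset[OF F(1)] p by blast
  then show "p \<in> H0" using Root_char by simp
  have le: "N1 p \<le> 2" using pR Root_char by simp
  have "p \<in> rel_frontier (Root n v)" using face_of_subset_rel_frontier[OF F] p by blast
  then have nri: "p \<notin> rel_interior (Root n v)" unfolding rel_frontier_def by blast
  show "N1 p = 2"
  proof (rule ccontr)
    assume "N1 p \<noteq> 2"
    then have lt: "N1 p < 2" using le by simp
    have o: "open {y :: real^'n. N1 y < 2}" by (rule open_Collect_less[OF N1_cont continuous_on_const])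
    have "{y :: real^'n. N1 y < 2} \<inter> affine hull (Root n v) \<subseteq> Root n v"
      using aff_H0 Root_char by auto
    then have "p \<in> rel_interior (Root n v)" unfolding rel_interior using pR o lt by blast
    then show False using nri by blast
  qed
qed

lemma relint_simplex: assumes g: "good n t" and s: "(\<Sum>x\<in>arcs n. t x) = 1"
  shows "phi n v t \<in> rel_interior (convex hull (root_vert v ` supp n t))"
proof -
  define \<sigma> where "\<sigma> = supp n t"
  have adm: "admissible n \<sigma>" using good_geom(1)[OF g s] by (simp add: \<sigma>_def)
  have sa: "\<sigma> \<subseteq> arcs n" and fs: "finite \<sigma>" using adm unfolding admissible_def by auto
  have injs: "inj_on (root_vert v) \<sigma>" using rv_inj[OF inj] sa inj_on_subset by blast
  have tg: "t \<in> geom_simplex \<sigma>" using good_geom(2)[OF g s] by (simp add: \<sigma>_def)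
  have ts: "sum t \<sigma> = 1" using tg unfolding geom_simplex_def by blast
  have tpos: "\<And>x. x \<in> \<sigma> \<Longrightarrow> 0 < t x" by (simp add: \<sigma>_def supp_def)
  have ph: "phi n v t = (\<Sum>x\<in>\<sigma>. t x *\<^sub>R root_vert v x)"
    by (rule phi_on[OF fs sa]) (simp add: \<sigma>_def good_zero[OF g])
  define u where "u q = t (inv_into \<sigma> (root_vert v) q)" for q
  have uu: "u (root_vert v x) = t x" if "x \<in> \<sigma>" for x using inv_into_f_f[OF injs that] by (simp add: u_def)
  have "sum u (root_vert v ` \<sigma>) = (\<Sum>x\<in>\<sigma>. u (root_vert v x))" using sum.reindex[OF injs, of u] by (simp add: o_def)
  also have "\<dots> = sum t \<sigma>" by (rule sum.cong) (simp_all add: uu)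
  finally have su: "sum u (root_vert v ` \<sigma>) = 1" using ts by simp
  have "(\<Sum>q\<in>root_vert v ` \<sigma>. u q *\<^sub>R q) = (\<Sum>x\<in>\<sigma>. u (root_vert v x) *\<^sub>R root_vert v x)"
    using sum.reindex[OF injs, of "\<lambda>q. u q *\<^sub>R q"] by (simp add: o_def)
  also have "\<dots> = (\<Sum>x\<in>\<sigma>. t x *\<^sub>R root_vert v x)" by (rule sum.cong) (simp_all add: uu)
  finally have sv: "(\<Sum>q\<in>root_vert v ` \<sigma>. u q *\<^sub>R q) = phi n v t" using ph by simp
  have up: "\<forall>q\<in>root_vert v ` \<sigma>. 0 < u q" using uu tpos by auto
  have "phi n v t \<in> {y. \<exists>u. (\<forall>x\<in>root_vert v ` \<sigma>. 0 < u x) \<and> sum u (root_vert v ` \<sigma>) = 1 \<and> (\<Sum>x\<in>root_vert v ` \<sigma>. u x *\<^sub>R x) = y}"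
    using up su sv by blast
  then show ?thesis unfolding \<sigma>_def[symmetric] rel_interior_convex_hull_explicit[OF affine_indep[OF adm]] .
qed

lemma faces: assumes F: "F face_of Root n v" "F \<noteq> Root n v"
  shows "\<exists>S \<subseteq> {\<sigma>. admissible n \<sigma>}. (\<Union>\<sigma>\<in>S. phi n v ` geom_simplex \<sigma>) = F"
proof -
  define S where "S = {\<sigma>. admissible n \<sigma> \<and> phi n v ` geom_simplex \<sigma> \<subseteq> F}"
  have "F \<subseteq> (\<Union>\<sigma>\<in>S. phi n v ` geom_simplex \<sigma>)"
  proof
    fix p assume p: "p \<in> F"
    obtain \<sigma> t where st: "admissible n \<sigma>" "t \<in> geom_simplex \<sigma>" "phi n v t = p"
      using existence[OF face_bd[OF F p]] by blast
    have g: "good n t" and s: "(\<Sum>x\<in>arcs n. t x) = 1" using geom_good[OF st(1,2)] by auto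
    define \<tau> where "\<tau> = supp n t"
    have adm: "admissible n \<tau>" and tg: "t \<in> geom_simplex \<tau>" using good_geom[OF g s] by (simp_all add: \<tau>_def)
    have ri: "p \<in> rel_interior (convex hull (root_vert v ` \<tau>))" using relint_simplex[OF g s] st(3) by (simp add: \<tau>_def)
    have "\<tau> \<subseteq> arcs n" using adm by (simp add: admissible_def)
    then have "root_vert v ` \<tau> \<subseteq> G" using G_eq by blast
    then have sub: "convex hull (root_vert v ` \<tau>) \<subseteq> Root n v" unfolding Root_G by (rule hull_mono)
    have "convex hull (root_vert v ` \<tau>) \<subseteq> F"
      by (rule subset_of_face_of[OF F(1) sub]) (use p ri in blast)
    then have "\<tau> \<in> S" using adm phi_simplex[OF adm] by (simp add: S_def)
    moreover have "p \<in> phi n v ` geom_simplex \<tau>" using tg st(3) by blast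
    ultimately show "p \<in> (\<Union>\<sigma>\<in>S. phi n v ` geom_simplex \<sigma>)" by blast
  qed
  moreover have "(\<Union>\<sigma>\<in>S. phi n v ` geom_simplex \<sigma>) \<subseteq> F" by (auto simp: S_def)
  moreover have "S \<subseteq> {\<sigma>. admissible n \<sigma>}" by (auto simp: S_def)
  ultimately show ?thesis by blast
qed

lemma cm_phi: "continuous_map (powertop_real UNIV) euclidean (phi n v)"
proof -
  have "continuous_map (powertop_real UNIV) euclidean (\<lambda>t. \<Sum>x\<in>arcs n. t x *\<^sub>R root_vert v x)"
  proof (rule continuous_map_sum[OF finite_arcs])
    fix x show "continuous_map (powertop_real UNIV) euclidean (\<lambda>t. t x *\<^sub>R root_vert v x)"
      by (rule cm_scale) (rule continuous_map_product_projection, simp)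
  qed
  then show ?thesis unfolding phi_def[abs_def] .
qed

lemma compact_simplex: assumes adm: "admissible n \<sigma>" shows "compactin (powertop_real UNIV) (geom_simplex \<sigma>)"
proof -
  have fs: "finite \<sigma>" using adm by (simp add: admissible_def)
  define B where "B x = (if x \<in> \<sigma> then {0..1::real} else {0})" for x
  have c1: "compactin (powertop_real UNIV) (PiE UNIV B)"
    unfolding compactin_PiE by (rule disjI2) (simp add: B_def)
  have cm: "continuous_map (powertop_real UNIV) euclideanreal (\<lambda>t. sum t \<sigma>)"
    by (rule continuous_map_sum[OF fs]) (rule continuous_map_product_projection, simp)
  have c2: "closedin (powertop_real UNIV) {t \<in> topspace (powertop_real UNIV). sum t \<sigma> \<in> {1}}"
    by (rule closedin_continuous_map_preimage[OF cm]) simp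
  have eq: "geom_simplex \<sigma> = {t \<in> topspace (powertop_real UNIV). sum t \<sigma> \<in> {1}} \<inter> PiE UNIV B"
  proof
    show "geom_simplex \<sigma> \<subseteq> {t \<in> topspace (powertop_real UNIV). sum t \<sigma> \<in> {1}} \<inter> PiE UNIV B"
    proof
      fix t assume t: "t \<in> geom_simplex \<sigma>"
      have nn: "\<And>x. 0 \<le> t x" and out: "\<And>x. x \<notin> \<sigma> \<Longrightarrow> t x = 0" and s: "sum t \<sigma> = 1"
        using t unfolding geom_simplex_def by auto
      have "t x \<in> B x" for x
      proof (cases "x \<in> \<sigma>")
        case True
        have "t x \<le> sum t \<sigma>" by (rule member_le_sum[OF True]) (simp_all add: nn fs)
        then show ?thesis using True nn[of x] s by (simp add: B_def)
      next
        case False then show ?thesis using out by (simp add: B_def)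
      qed
      then show "t \<in> {t \<in> topspace (powertop_real UNIV). sum t \<sigma> \<in> {1}} \<inter> PiE UNIV B"
        using s by (simp add: PiE_UNIV_domain)
    qed
    show "{t \<in> topspace (powertop_real UNIV). sum t \<sigma> \<in> {1}} \<inter> PiE UNIV B \<subseteq> geom_simplex \<sigma>"
    proof
      fix t assume t: "t \<in> {t \<in> topspace (powertop_real UNIV). sum t \<sigma> \<in> {1}} \<inter> PiE UNIV B"
      then have tb: "\<And>x. t x \<in> B x" and s: "sum t \<sigma> = 1" by (auto simp: PiE_UNIV_domain)
      have "0 \<le> t x" for x using tb[of x] by (cases "x \<in> \<sigma>") (simp_all add: B_def)
      moreover have "x \<notin> \<sigma> \<longrightarrow> t x = 0" for x using tb[of x] by (cases "x \<in> \<sigma>") (simp_all add: B_def)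
      ultimately show "t \<in> geom_simplex \<sigma>" unfolding geom_simplex_def using s by blast
    qed
  qed
  show ?thesis unfolding eq by (rule closed_Int_compactin[OF c2 c1])
qed

lemma homeo: "homeomorphic_map (realization_top n) (top_of_set (Root_boundary n v)) (phi n v)"
proof -
  have ts: "topspace (realization_top n) = realization n" by (simp add: realization_top_def)
  have img: "phi n v ` realization n = Root_boundary n v"
    unfolding realization_def using union_bd by (simp add: image_UN)
  show ?thesis
  proof (rule continuous_imp_homeomorphic_map)
    show "continuous_map (realization_top n) (top_of_set (Root_boundary n v)) (phi n v)"
      unfolding continuous_map_in_subtopology
    proof
      show "continuous_map (realization_top n) euclidean (phi n v)"
        unfolding realization_top_def by (rule continuous_map_from_subtopology[OF cm_phi])
      show "phi n v \<in> topspace (realization_top n) \<rightarrow> Root_boundary n v" using ts img by blast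
    qed
    show "compact_space (realization_top n)"
      unfolding realization_top_def realization_def
      by (rule compact_space_subtopology, rule compactin_Union) (auto simp: fin_adm compact_simplex)
    show "Hausdorff_space (top_of_set (Root_boundary n v))"
      by (rule Hausdorff_space_subtopology) simp
    show "phi n v ` topspace (realization_top n) = topspace (top_of_set (Root_boundary n v))"
      using ts img by simp
    show "inj_on (phi n v) (topspace (realization_top n))"
    proof (rule inj_onI)
      fix t t' assume t: "t \<in> topspace (realization_top n)" and t': "t' \<in> topspace (realization_top n)"
        and e: "phi n v t = phi n v t'"
      obtain \<sigma> where s: "admissible n \<sigma>" "t \<in> geom_simplex \<sigma>" using t ts unfolding realization_def by blast
      obtain \<sigma>' where s': "admissible n \<sigma>'" "t' \<in> geom_simplex \<sigma>'" using t' ts unfolding realization_def by blast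
      show "t = t'" using inj_phi[OF geom_good(1)[OF s] geom_good(1)[OF s'] geom_good(2)[OF s] geom_good(2)[OF s'] inj e] n3
        by simp
    qed
  qed
qed

end




theorem mainTheorem5:
  fixes v :: "nat \<Rightarrow> 'n::finite" and n :: nat
  assumes "n = CARD('n)" and "n \<ge> 3" and "bij_betw v {..<n} UNIV"
  shows "homeomorphic_map (realization_top n) (top_of_set (Root_boundary n v)) (phi n v)
    \<and> {p. p extreme_point_of Root n v} = {ee v i - ee v j | i j. i < n \<and> j < n \<and> i \<noteq> j}
    \<and> bij_betw (\<lambda>x. phi n v (vertex_pt x)) (arcs n) {p. p extreme_point_of Root n v}
    \<and> (\<forall>\<sigma>. admissible n \<sigma> \<longrightarrow>
          phi n v ` geom_simplex \<sigma> = convex hull (root_vert v ` \<sigma>)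
        \<and> \<not> affine_dependent (root_vert v ` \<sigma>)
        \<and> root_vert v ` \<sigma> \<subseteq> {p. p extreme_point_of Root n v})
    \<and> triangulation ((\<lambda>\<sigma>. phi n v ` geom_simplex \<sigma>) ` {\<sigma>. admissible n \<sigma>})
    \<and> \<Union>((\<lambda>\<sigma>. phi n v ` geom_simplex \<sigma>) ` {\<sigma>. admissible n \<sigma>}) = Root_boundary n v
    \<and> (\<forall>F. F face_of Root n v \<and> F \<noteq> Root n v \<longrightarrow>
          (\<exists>S \<subseteq> {\<sigma>. admissible n \<sigma>}. (\<Union>\<sigma>\<in>S. phi n v ` geom_simplex \<sigma>) = F))"
proof -
  interpret rootctx v n using assms by unfold_locales
  have part4: "\<forall>\<sigma>. admissible n \<sigma> \<longrightarrow>
          phi n v ` geom_simplex \<sigma> = convex hull (root_vert v ` \<sigma>)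
        \<and> \<not> affine_dependent (root_vert v ` \<sigma>)
        \<and> root_vert v ` \<sigma> \<subseteq> {p. p extreme_point_of Root n v}"
  proof (intro allI impI conjI)
    fix \<sigma> assume a: "admissible n \<sigma>"
    show "phi n v ` geom_simplex \<sigma> = convex hull (root_vert v ` \<sigma>)" by (rule phi_simplex[OF a])
    show "\<not> affine_dependent (root_vert v ` \<sigma>)" by (rule affine_indep[OF a])
    have "\<sigma> \<subseteq> arcs n" using a by (simp add: admissible_def)
    then show "root_vert v ` \<sigma> \<subseteq> {p. p extreme_point_of Root n v}" unfolding ext_eq G_eq by blast
  qed
  have part7: "\<forall>F. F face_of Root n v \<and> F \<noteq> Root n v \<longrightarrow>
          (\<exists>S \<subseteq> {\<sigma>. admissible n \<sigma>}. (\<Union>\<sigma>\<in>S. phi n v ` geom_simplex \<sigma>) = F)"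
    using faces by blast
  have part2: "{p. p extreme_point_of Root n v} = {ee v i - ee v j | i j. i < n \<and> j < n \<and> i \<noteq> j}"
    using ext_eq unfolding G_def .
  show ?thesis using homeo part2 bij_vert part4 triang union_bd part7 by blast
qed


end
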